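(* For all $\tau\in\mathbb{H}$, $$s\!\left(\frac{-1}{\tau}\right)=\frac{\varepsilon_1 s(\tau)-\eta_3 t(\tau)+1}{s(\tau)-\varepsilon_1 t(\tau)-\eta_3}=\frac{\varepsilon_1 s(\tau)+(\varepsilon_1^2-\varepsilon_1-1)t(\tau)+1}{s(\tau)-\varepsilon_1 t(\tau)+\varepsilon_1^2-\varepsilon_1-1},$$ $$t\!\left(\frac{-1}{\tau}\right)=\frac{-\eta_3 s(\tau)-t(\tau)-\varepsilon_1}{s(\tau)-\varepsilon_1 t(\tau)-\eta_3}=\frac{(\varepsilon_1^2-\varepsilon_1-1)s(\tau)-t(\tau)-\varepsilon_1}{s(\tau)-\varepsilon_1 t(\tau)+\varepsilon_1^2-\varepsilon_1-1}.$$
   Context: Let $\tau\in\mathbb{H}$, $q=e^{2\pi i\tau}$, $q^{\alpha}=e^{2\pi i\alpha\tau}$. Define $s(\tau)=q^{-3/7}\prod_{n\ge1}\frac{(1-q^{7n-3})(1-q^{7n-4})}{(1-q^{7n-1})(1-q^{7n-6})}$ and $t(\tau)=q^{-2/7}\prod_{n\ge1}\frac{(1-q^{7n-2})(1-q^{7n-5})}{(1-q^{7n-1})(1-q^{7n-6})}$ (so $s=u/w$, $t=v/w$ with $u=q^{1/56}\prod_{k\ge0}(1-q^{7k+3})(1-q^{7k+4})(1-q^{7k+7})$, $v=q^{9/56}\prod_{k\ge0}(1-q^{7k+2})(1-q^{7k+5})(1-q^{7k+7})$, $w=q^{25/56}\prod_{k\ge0}(1-q^{7k+1})(1-q^{7k+6})(1-q^{7k+7})$).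 Let $\zeta_7=e^{2\pi i/7}$, $\eta_i=\zeta_7^i+\zeta_7^{-i}$, and $\varepsilon_1=1+\eta_1=1+\zeta_7+\zeta_7^6$. *)

theory Defs
  imports "HOL-Analysis.Analysis"
begin

definition qpow :: "complex \<Rightarrow> real \<Rightarrow> complex" where
  "qpow \<tau> \<alpha> = exp (2 * of_real pi * \<i> * of_real \<alpha> * \<tau>)"

definition s_fun :: "complex \<Rightarrow> complex" where
  "s_fun \<tau> = qpow \<tau> (-3/7) *
     (\<Prod>n. ((1 - qpow \<tau> (real (7 * Suc n - 3))) * (1 - qpow \<tau> (real (7 * Suc n - 4)))) /
            ((1 - qpow \<tau> (real (7 * Suc n - 1))) * (1 - qpow \<tau> (real (7 * Suc n - 6)))))"

definition t_fun :: "complex \<Rightarrow> complex" where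
  "t_fun \<tau> = qpow \<tau> (-2/7) *
     (\<Prod>n. ((1 - qpow \<tau> (real (7 * Suc n - 2))) * (1 - qpow \<tau> (real (7 * Suc n - 5)))) /
            ((1 - qpow \<tau> (real (7 * Suc n - 1))) * (1 - qpow \<tau> (real (7 * Suc n - 6)))))"

definition zeta7 :: complex where
  "zeta7 = exp (2 * of_real pi * \<i> / 7)"

definition eta7 :: "nat \<Rightarrow> complex" where
  "eta7 i = zeta7 ^ i + inverse zeta7 ^ i"

definition eps1 :: complex where
  "eps1 = 1 + eta7 1"

end

theory Submission
  imports Defs "HOL-Complex_Analysis.Complex_Analysis"
begin


fun tri :: "nat \<Rightarrow> nat" where
  "tri 0 = 0"
| "tri (Suc k) = tri k + k"

lemma tri_2: "2 * tri k + k = k * k"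
  by (induction k) (auto simp: algebra_simps)

fun gb :: "complex \<Rightarrow> nat \<Rightarrow> nat \<Rightarrow> complex" where
  "gb Q n 0 = 1"
| "gb Q 0 (Suc k) = 0"
| "gb Q (Suc n) (Suc k) = Q^(Suc k) * gb Q n (Suc k) + gb Q n k"

lemma gb_zero: "k > n \<Longrightarrow> gb Q n k = 0"
  by (induction Q n k rule: gb.induct) auto

lemma qbinom: "(\<Prod>k<n. 1 + Q^k * t) = (\<Sum>k\<le>n. Q^(tri k) * gb Q n k * t^k)"
proof (induction n arbitrary: t)
  case 0
  then show ?case by simp
next
  case (Suc n)
  define g where "g k = Q^(tri k) * gb Q n k * (Q*t)^k" for k
  have L: "(\<Prod>k<Suc n. 1 + Q^k * t) = (1+t) * (\<Prod>k<n. 1 + Q^k * (Q*t))"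
    by (subst prod.lessThan_Suc_shift) (simp add: algebra_simps)
  have g0: "g (Suc n) = 0" by (simp add: g_def gb_zero)
  have A: "(\<Sum>k\<le>n. g k) = 1 + (\<Sum>k\<le>n. g (Suc k))"
  proof -
    have "(\<Sum>k\<le>Suc n. g k) = g 0 + (\<Sum>k\<le>n. g (Suc k))"
      by (rule sum.atMost_Suc_shift)
    moreover have "(\<Sum>k\<le>Suc n. g k) = (\<Sum>k\<le>n. g k)" using g0 by simp
    moreover have "g 0 = 1" by (simp add: g_def)
    ultimately show ?thesis by simp
  qed
  have "(\<Sum>k\<le>Suc n. Q^(tri k) * gb Q (Suc n) k * t^k)
      = 1 + (\<Sum>k\<le>n. Q^(tri (Suc k)) * gb Q (Suc n) (Suc k) * t^(Suc k))"
    by (subst sum.atMost_Suc_shift) simp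
  also have "\<dots> = 1 + (\<Sum>k\<le>n. g (Suc k) + t * g k)"
    by (intro arg_cong2[where f="(+)"] refl sum.cong)
       (simp_all add: g_def algebra_simps power_add power_mult_distrib)
  also have "\<dots> = (1 + t) * (\<Sum>k\<le>n. g k)"
  proof -
    have "(1 + t) * (\<Sum>k\<le>n. g k) = (\<Sum>k\<le>n. g k) + t * (\<Sum>k\<le>n. g k)"
      by (simp add: algebra_simps)
    also have "\<dots> = 1 + (\<Sum>k\<le>n. g (Suc k)) + (\<Sum>k\<le>n. t * g k)"
      by (subst A) (simp add: sum_distrib_left)
    finally show ?thesis by (simp add: sum.distrib)
  qed
  finally show ?case using L Suc.IH[of "Q*t"] by (simp add: g_def)
qed

definition qf :: "complex \<Rightarrow> nat \<Rightarrow> complex" where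
  "qf Q n = (\<Prod>i<n. 1 - Q^(Suc i))"

lemma qf_0 [simp]: "qf Q 0 = 1" by (simp add: qf_def)
lemma qf_Suc: "qf Q (Suc n) = qf Q n * (1 - Q^(Suc n))" by (simp add: qf_def)

lemma gb_closed: "k \<le> n \<Longrightarrow> gb Q n k * qf Q k * qf Q (n - k) = qf Q n"
proof (induction n arbitrary: k)
  case 0
  then show ?case by simp
next
  case (Suc n)
  show ?case
  proof (cases k)
    case 0
    then show ?thesis by simp
  next
    case (Suc j)
    show ?thesis
    proof (cases "j = n")
      case True
      have "gb Q n n * qf Q n = qf Q n" using Suc.IH[of n] by simp
      then have "qf Q n = 0 \<or> gb Q n n = 1" by auto
      then show ?thesis using True Suc by (auto simp: qf_Suc gb_zero algebra_simps)
    next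
      case False
      with Suc Suc.prems have jn: "j < n" by simp
      have I1: "gb Q n (Suc j) * qf Q (Suc j) * qf Q (n - Suc j) = qf Q n"
        using Suc.IH[of "Suc j"] jn by simp
      have I2: "gb Q n j * qf Q j * qf Q (n - j) = qf Q n"
        using Suc.IH[of j] jn by simp
      have nj: "n - j = Suc (n - Suc j)" using jn by simp
      have pw: "Q^(Suc j) * Q^(n - j) = Q^(Suc n)"
        using jn by (simp add: power_add[symmetric])
      have "gb Q (Suc n) k * qf Q k * qf Q (Suc n - k)
          = (Q^(Suc j) * gb Q n (Suc j) + gb Q n j) * (qf Q j * (1 - Q^(Suc j))) * qf Q (n - j)"
        using Suc by (simp add: qf_Suc)
      also have "\<dots> = Q^(Suc j) * (gb Q n (Suc j) * qf Q (Suc j) * qf Q (n - Suc j)) * (1 - Q^(n-j))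
                    + (gb Q n j * qf Q j * qf Q (n - j)) * (1 - Q^(Suc j))"
        unfolding nj by (simp add: qf_Suc algebra_simps)
      also have "\<dots> = qf Q n * (1 - Q^(Suc n))"
        unfolding I1 I2 using pw by (auto simp: algebra_simps)
      finally show ?thesis by (simp add: qf_Suc)
    qed
  qed
qed

lemma prod_split_add: "(\<Prod>k<N+(M::nat). f k) = (\<Prod>k<N. f k) * (\<Prod>n<M. f (N+n))"
  by (induction M) (auto simp: algebra_simps)

lemma sum_split_add: "(\<Sum>k<N+(M::nat). f k) = (\<Sum>k<N. f k) + (\<Sum>n<M. f (N+n))"
  by (induction M) (auto simp: algebra_simps)

lemma xv_pow:
  fixes x v :: complex
  assumes "x * v = 1" "a + d = b + c"
  shows "x^a * v^b = x^c * v^d"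
proof -
  have x0: "x \<noteq> 0" using assms(1) by auto
  have "x^a * v^b * x^(b+d) = x^(a+d) * (x * v) ^ b"
    by (simp add: power_add power_mult_distrib algebra_simps)
  also have "\<dots> = x^(b+c)" using assms by simp
  also have "\<dots> = x^c * v^d * x^(b+d)"
    using assms(1) by (simp add: power_add power_mult_distrib[symmetric] algebra_simps)
  finally show ?thesis using x0 by simp
qed

lemma prod_odd_pow: "(\<Prod>n<N. (v::complex)^(2*n+1)) = v^(N*N)"
proof (induction N)
  case (Suc N)
  have e: "N * N + (2 * N + 1) = Suc N * Suc N" by simp
  have "v ^ (N * N) * v ^ (2 * N + 1) = v ^ (Suc N * Suc N)"
    by (simp only: power_add[symmetric] e)
  then show ?case using Suc by simp
qed simp

lemma jtp_finite:
  fixes x w :: complex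
  assumes x0: "x \<noteq> 0" and w0: "w \<noteq> 0"
  shows "(\<Prod>k<N. (1 + x^(2*k+1) * w) * (1 + x^(2*k+1) / w))
       = (\<Sum>n\<le>N. x^(n*n) * w^n * gb (x^2) (2*N) (N+n))
       + (\<Sum>n<N. x^(Suc n * Suc n) * (1/w)^(Suc n) * gb (x^2) (2*N) (N - Suc n))"
proof -
  define v where "v = 1 / x"
  have xv: "x * v = 1" using x0 by (simp add: v_def)
  define Q where "Q = x^2"
  define t where "t = w * v^(2*N-1)"
  define f where "f k = 1 + Q^k * t" for k
  have qb: "(\<Prod>k<2*N. f k) = (\<Sum>k\<le>2*N. Q^(tri k) * gb Q (2*N) k * t^k)"
    unfolding f_def by (rule qbinom)
  show ?thesis
  proof (cases N)
    case 0
    then show ?thesis by simp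
  next
    case (Suc M)
    have N1: "N \<ge> 1" using Suc by simp
    have fhi: "f (N+n) = 1 + x^(2*n+1) * w" for n
    proof -
      have "x^(2*(N+n)) * v^(2*N-1) = x^(2*n+1) * v^0"
        by (rule xv_pow[OF xv]) (use N1 in simp)
      then show ?thesis by (simp add: f_def Q_def t_def power_mult[symmetric] algebra_simps)
    qed
    have flo: "f (N - Suc n) = v^(2*n+1) * w * (1 + x^(2*n+1) / w)" if "n < N" for n
    proof -
      have "x^(2*(N - Suc n)) * v^(2*N-1) = x^0 * v^(2*n+1)"
        by (rule xv_pow[OF xv]) (use that in simp)
      moreover have "v^(2*n+1) * x^(2*n+1) = 1"
        using xv by (simp add: power_mult_distrib[symmetric] algebra_simps)
      ultimately show ?thesis
        using w0 by (simp add: f_def Q_def t_def power_mult field_simps)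
    qed
    have "(\<Prod>k<2*N. f k) = (\<Prod>k<N. f k) * (\<Prod>n<N. f (N+n))"
      using prod_split_add[of f N N] by (simp add: mult_2)
    also have "(\<Prod>k<N. f k) = (\<Prod>n<N. f (N - Suc n))"
      by (rule prod.nat_diff_reindex[symmetric])
    also have "\<dots> = (\<Prod>n<N. v^(2*n+1) * w * (1 + x^(2*n+1) / w))"
      by (rule prod.cong) (auto simp: flo)
    also have "\<dots> = v^(N*N) * w^N * (\<Prod>n<N. (1 + x^(2*n+1) / w))"
      by (simp only: prod.distrib prod_odd_pow prod_constant card_lessThan)
    also have "(\<Prod>n<N. f (N+n)) = (\<Prod>n<N. 1 + x^(2*n+1) * w)"
      by (simp only: fhi)
    finally have L0: "(\<Prod>k<2*N. f k) = v^(N*N) * w^N * (\<Prod>n<N. (1 + x^(2*n+1) / w))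
        * (\<Prod>n<N. 1 + x^(2*n+1) * w)" .
    have pd: "(\<Prod>k<N. (1 + x^(2*k+1) * w) * (1 + x^(2*k+1) / w))
        = (\<Prod>n<N. 1 + x^(2*n+1) * w) * (\<Prod>n<N. (1 + x^(2*n+1) / w))"
      by (rule prod.distrib)
    have L: "(\<Prod>k<2*N. f k) = v^(N*N) * w^N *
        (\<Prod>k<N. (1 + x^(2*k+1) * w) * (1 + x^(2*k+1) / w))"
      unfolding L0 pd by (simp only: mult_ac)
    define g where "g k = Q^(tri k) * gb Q (2*N) k * t^k" for k
    have "(\<Sum>k\<le>2*N. g k) = (\<Sum>k<N + Suc N. g k)"
      by (simp add: lessThan_Suc_atMost[symmetric] mult_2)
    also have "\<dots> = (\<Sum>k<N. g k) + (\<Sum>n<Suc N. g (N+n))"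
      by (rule sum_split_add)
    also have "(\<Sum>k<N. g k) = (\<Sum>n<N. g (N - Suc n))"
      by (rule sum.nat_diff_reindex[symmetric])
    finally have R0: "(\<Sum>k\<le>2*N. g k) = (\<Sum>n<N. g (N - Suc n)) + (\<Sum>n\<le>N. g (N+n))"
      by (simp add: lessThan_Suc_atMost)
    have ghi: "g (N+n) = v^(N*N) * w^N * (x^(n*n) * w^n * gb (x^2) (2*N) (N+n))" for n
    proof -
      define k where "k = N + n"
      have e: "2 * tri k + N*N = (2*N-1)*k + n*n"
      proof -
        have a: "2 * tri k + k = k * k" by (rule tri_2)
        have b: "k*k + N*N = 2*N*k + n*n" unfolding k_def by (simp add: algebra_simps)
        have c: "(2*N-1)*k + k = 2*N*k" using N1 by (simp add: algebra_simps diff_mult_distrib)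
        show ?thesis using a b c by linarith
      qed
      have E: "x^(2*tri k) * v^((2*N-1)*k) = x^(n*n) * v^(N*N)"
        by (rule xv_pow[OF xv]) (use e in simp)
      have "g (N+n) = gb Q (2*N) k * w^k * (x^(2*tri k) * v^((2*N-1)*k))"
      proof -
        have T: "t^k = w^k * v^((2*N-1)*k)" by (simp add: t_def power_mult_distrib power_mult)
        have QQ: "Q^(tri k) = x^(2*tri k)" by (simp add: Q_def power_mult)
        show ?thesis unfolding g_def k_def[symmetric] T QQ by (simp only: mult_ac)
      qed
      also have "\<dots> = gb Q (2*N) k * w^k * (x^(n*n) * v^(N*N))" by (simp only: E)
      finally show ?thesis
        by (simp add: k_def Q_def power_add)
    qed
    have glo: "g (N - Suc n) = v^(N*N) * w^N * (x^(Suc n * Suc n) * (1/w)^(Suc n) * gb (x^2) (2*N) (N - Suc n))"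
      if "n < N" for n
    proof -
      define k where "k = N - Suc n"
      have Nk: "N = k + Suc n" using that by (simp add: k_def)
      have e: "2 * tri k + N*N = (2*N-1)*k + Suc n * Suc n"
      proof -
        have a: "2 * tri k + k = k * k" by (rule tri_2)
        have b: "k*k + N*N = 2*N*k + Suc n * Suc n" unfolding Nk by (simp add: algebra_simps)
        have c: "(2*N-1)*k + k = 2*N*k" using N1 by (simp add: algebra_simps diff_mult_distrib)
        show ?thesis using a b c by linarith
      qed
      have E1: "x^(2*tri k) * v^((2*N-1)*k) = x^(Suc n * Suc n) * v^(N*N)"
        by (rule xv_pow[OF xv]) (use e in simp)
      have E2: "w^k = w^N * (1/w)^(Suc n)"
        using w0 unfolding Nk by (simp add: power_add field_simps)
      have "g (N - Suc n) = gb Q (2*N) k * w^k * (x^(2*tri k) * v^((2*N-1)*k))"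
      proof -
        have T: "t^k = w^k * v^((2*N-1)*k)" by (simp add: t_def power_mult_distrib power_mult)
        have QQ: "Q^(tri k) = x^(2*tri k)" by (simp add: Q_def power_mult)
        show ?thesis unfolding g_def k_def[symmetric] T QQ by (simp only: mult_ac)
      qed
      also have "\<dots> = gb Q (2*N) k * (w^N * (1/w)^(Suc n)) * (x^(Suc n * Suc n) * v^(N*N))"
        by (simp only: E1 E2)
      finally show ?thesis
        by (simp add: k_def Q_def)
    qed
    have R: "(\<Sum>k\<le>2*N. g k) = v^(N*N) * w^N *
       ((\<Sum>n\<le>N. x^(n*n) * w^n * gb (x^2) (2*N) (N+n))
       + (\<Sum>n<N. x^(Suc n * Suc n) * (1/w)^(Suc n) * gb (x^2) (2*N) (N - Suc n)))"
    proof -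
      have s1: "(\<Sum>n\<le>N. g (N+n)) = (\<Sum>n\<le>N. v^(N*N) * w^N * (x^(n*n) * w^n * gb (x^2) (2*N) (N+n)))"
        by (rule sum.cong[OF refl], rule ghi)
      have s2: "(\<Sum>n<N. g (N - Suc n)) = (\<Sum>n<N. v^(N*N) * w^N * (x^(Suc n * Suc n) * (1/w)^(Suc n) * gb (x^2) (2*N) (N - Suc n)))"
        by (rule sum.cong[OF refl], rule glo, simp)
      show ?thesis unfolding R0 s1 s2 by (simp only: sum_distrib_left[symmetric] distrib_left add.commute)
    qed
    have nz: "v^(N*N) * w^N \<noteq> 0" using xv w0 by auto
    have "(\<Prod>k<2*N. f k) = (\<Sum>k\<le>2*N. g k)" unfolding g_def by (rule qb)
    then have "v^(N*N) * w^N * (\<Prod>k<N. (1 + x^(2*k+1) * w) * (1 + x^(2*k+1) / w)) =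
       v^(N*N) * w^N *
       ((\<Sum>n\<le>N. x^(n*n) * w^n * gb (x^2) (2*N) (N+n))
       + (\<Sum>n<N. x^(Suc n * Suc n) * (1/w)^(Suc n) * gb (x^2) (2*N) (N - Suc n)))"
      by (simp only: L R)
    then show ?thesis by (rule mult_left_cancel[THEN iffD1, OF nz])
  qed
qed

lemma cprod_summable:
  fixes a :: "nat \<Rightarrow> complex"
  assumes "summable (\<lambda>n. norm (a n))"
  shows "convergent_prod (\<lambda>n. 1 + a n)"
  by (rule abs_convergent_prod_imp_convergent_prod, rule summable_imp_abs_convergent_prod)
     (use assms in simp)

lemma rprod_summable:
  fixes a :: "nat \<Rightarrow> real"
  assumes "summable (\<lambda>n. norm (a n))"
  shows "convergent_prod (\<lambda>n. 1 + a n)"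
  by (rule abs_convergent_prod_imp_convergent_prod, rule summable_imp_abs_convergent_prod)
     (use assms in simp)

lemma summable_geom_Suc: "norm (Q::complex) < 1 \<Longrightarrow> summable (\<lambda>i. norm (Q^Suc i))"
  by (subst summable_Suc_iff) (simp add: norm_power summable_geometric)

lemma summable_rgeom_Suc: "0 \<le> r \<Longrightarrow> r < 1 \<Longrightarrow> summable (\<lambda>i. norm ((r::real)^Suc i))"
  by (subst summable_Suc_iff) (simp add: summable_geometric)

definition qfinf :: "complex \<Rightarrow> complex" where
  "qfinf Q = (\<Prod>i. 1 - Q^(Suc i))"

lemma qf_conv: "norm (Q::complex) < 1 \<Longrightarrow> convergent_prod (\<lambda>i. 1 - Q^(Suc i))"
  using cprod_summable[of "\<lambda>i. - (Q^Suc i)"] summable_geom_Suc[of Q] by simp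

lemma pow_ne_1: "norm (Q::complex) < 1 \<Longrightarrow> 1 - Q^(Suc i) \<noteq> 0"
proof
  assume "norm Q < 1" "1 - Q^(Suc i) = 0"
  then have "norm (Q^Suc i) = 1" by (metis eq_iff_diff_eq_0 norm_one)
  moreover have "norm (Q^Suc i) < 1"
  proof -
    have "norm Q ^ i \<le> 1" by (rule power_le_one) (use \<open>norm Q < 1\<close> in auto)
    then have "norm Q * norm Q ^ i \<le> norm Q" by (simp add: mult_left_le)
    then show ?thesis using \<open>norm Q < 1\<close> by (simp add: norm_power norm_mult)
  qed
  ultimately show False by simp
qed

lemma qfinf_nz: assumes "norm Q < 1" shows "qfinf Q \<noteq> 0"
  unfolding qfinf_def by (rule prodinf_nonzero[OF qf_conv[OF assms]]) (rule pow_ne_1[OF assms])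

lemma qf_lim: "norm (Q::complex) < 1 \<Longrightarrow> (\<lambda>n. qf Q n) \<longlonglongrightarrow> qfinf Q"
proof -
  assume Q: "norm Q < 1"
  have "(\<lambda>n. \<Prod>i\<le>n. 1 - Q^(Suc i)) \<longlonglongrightarrow> qfinf Q"
    unfolding qfinf_def by (rule convergent_prod_LIMSEQ[OF qf_conv[OF Q]])
  then have "(\<lambda>n. qf Q (Suc n)) \<longlonglongrightarrow> qfinf Q"
    by (simp add: qf_def lessThan_Suc_atMost)
  then show ?thesis by (rule filterlim_sequentially_Suc[THEN iffD1])
qed

lemma qf_lim_lin: "norm (Q::complex) < 1 \<Longrightarrow> a \<ge> 1 \<Longrightarrow> (\<lambda>n. qf Q (a*n + b)) \<longlonglongrightarrow> qfinf Q"
proof -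
  assume Q: "norm Q < 1" and a: "a \<ge> 1"
  have sm: "strict_mono (\<lambda>n::nat. a*n + b)"
    using a by (intro strict_monoI) simp
  from LIMSEQ_subseq_LIMSEQ[OF qf_lim[OF Q] sm] show ?thesis by (simp add: o_def)
qed

definition rp :: "real \<Rightarrow> real" where "rp r = (\<Prod>i. 1 + r^(Suc i))"
definition rm :: "real \<Rightarrow> real" where "rm r = (\<Prod>i. 1 - r^(Suc i))"

lemma rpow_lt1: "0 \<le> r \<Longrightarrow> r < 1 \<Longrightarrow> (r::real)^Suc i < 1"
proof -
  assume r: "0 \<le> r" "r < 1"
  have "r ^ i \<le> 1" by (rule power_le_one) (use r in auto)
  then have "r * r ^ i \<le> r" using r by (simp add: mult_left_le)
  then show ?thesis using r by simp
qed

lemma rp_conv: "0 \<le> (r::real) \<Longrightarrow> r < 1 \<Longrightarrow> convergent_prod (\<lambda>i. 1 + r^(Suc i))"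
  using rprod_summable[of "\<lambda>i. r^Suc i"] summable_rgeom_Suc[of r] by simp

lemma rm_conv: "0 \<le> (r::real) \<Longrightarrow> r < 1 \<Longrightarrow> convergent_prod (\<lambda>i. 1 - r^(Suc i))"
  using rprod_summable[of "\<lambda>i. - (r^Suc i)"] summable_rgeom_Suc[of r] by simp

lemma rm_pos: "0 \<le> (r::real) \<Longrightarrow> r < 1 \<Longrightarrow> rm r > 0"
  unfolding rm_def
proof (rule less_0_prodinf[OF rm_conv])
  fix i assume "0 \<le> r" "r < 1"
  then have "r^Suc i < 1" by (rule rpow_lt1)
  then show "1 - r^Suc i > 0" by simp
qed

lemma qf_upper: "norm (Q::complex) < 1 \<Longrightarrow> norm (qf Q n) \<le> rp (norm Q)"
proof -
  assume Q: "norm Q < 1"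
  define r where "r = norm Q"
  have r: "0 \<le> r" "r < 1" using Q by (auto simp: r_def)
  have "norm (qf Q n) = (\<Prod>i<n. norm (1 - Q^Suc i))" by (simp add: qf_def prod_norm)
  also have "\<dots> \<le> (\<Prod>i<n. 1 + r^Suc i)"
    by (intro prod_mono conjI norm_ge_zero)
       (metis norm_one norm_power norm_triangle_ineq4 r_def)
  also have "\<dots> \<le> rp r"
    unfolding rp_def by (rule prod_le_prodinf) (use rp_conv[OF r] r in auto)
  finally show ?thesis by (simp add: r_def)
qed

lemma qf_lower: "norm (Q::complex) < 1 \<Longrightarrow> norm (qf Q n) \<ge> rm (norm Q)"
proof -
  assume Q: "norm Q < 1"
  define r where "r = norm Q"
  have r: "0 \<le> r" "r < 1" using Q by (auto simp: r_def)
  have r1: "r^Suc i \<le> 1" for i using rpow_lt1[OF r, of i] by simp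
  have "rm r \<le> (\<Prod>i<n. 1 - r^Suc i)"
    unfolding rm_def by (rule prod_ge_prodinf) (use rm_conv[OF r] r1 r in auto)
  also have "\<dots> \<le> (\<Prod>i<n. norm (1 - Q^Suc i))"
  proof (intro prod_mono conjI)
    fix i
    show "0 \<le> 1 - r^Suc i" using r1[of i] by simp
    have "norm (1::complex) - norm (Q^Suc i) \<le> norm (1 - Q^Suc i)" by (rule norm_triangle_ineq2)
    then show "1 - r^Suc i \<le> norm (1 - Q^Suc i)" by (simp add: r_def norm_power norm_mult)
  qed
  also have "\<dots> = norm (qf Q n)" by (simp add: qf_def prod_norm)
  finally show ?thesis by (simp add: r_def)
qed

lemma gb_bound: "norm (Q::complex) < 1 \<Longrightarrow> norm (gb Q n k) \<le> rp (norm Q) / (rm (norm Q) * rm (norm Q))"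
proof -
  assume Q: "norm Q < 1"
  have r: "0 \<le> norm Q" "norm Q < 1" using Q by auto
  have rmp: "rm (norm Q) > 0" by (rule rm_pos[OF r])
  have rpp: "rp (norm Q) \<ge> 0" using qf_upper[OF Q, of 0] by simp
  show ?thesis
  proof (cases "k \<le> n")
    case True
    have l1: "norm (qf Q k) \<ge> rm (norm Q)" "norm (qf Q (n-k)) \<ge> rm (norm Q)"
      using qf_lower[OF Q] by auto
    then have nz: "qf Q k \<noteq> 0" "qf Q (n-k) \<noteq> 0" using rmp by auto
    have "gb Q n k = qf Q n / (qf Q k * qf Q (n-k))"
      using gb_closed[OF True, of Q] nz by (simp add: field_simps)
    then have "norm (gb Q n k) = norm (qf Q n) / (norm (qf Q k) * norm (qf Q (n-k)))"
      by (simp add: norm_divide norm_mult)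
    also have "\<dots> \<le> rp (norm Q) / (rm (norm Q) * rm (norm Q))"
      by (intro frac_le qf_upper[OF Q] mult_mono l1 mult_pos_pos rmp rpp) (use rmp in auto)
    finally show ?thesis .
  next
    case False
    then show ?thesis using rmp rpp by (simp add: gb_zero)
  qed
qed

lemma gb_lim1: "norm (Q::complex) < 1 \<Longrightarrow> (\<lambda>N. gb Q (2*N) (N+n)) \<longlonglongrightarrow> 1 / qfinf Q"
proof -
  assume Q: "norm Q < 1"
  have e: "gb Q (2*(N+n)) ((N+n)+n) = qf Q (2*N + 2*n) / (qf Q (1*N + 2*n) * qf Q (1*N + 0))" for N
  proof -
    have k: "(N+n)+n = 1*N + 2*n" and m: "2*(N+n) = 2*N+2*n" by simp_all
    have d: "(2*N+2*n) - (1*N+2*n) = 1*N+0" by simp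
    have le: "1*N + 2*n \<le> 2*N+2*n" by simp
    have nz: "qf Q k \<noteq> 0" for k using qf_lower[OF Q, of k] rm_pos[of "norm Q"] Q by auto
    show ?thesis unfolding k m using gb_closed[OF le, of Q] nz unfolding d
      by (simp add: field_simps)
  qed
  have "(\<lambda>N. qf Q (2*N + 2*n) / (qf Q (1*N + 2*n) * qf Q (1*N + 0))) \<longlonglongrightarrow> qfinf Q / (qfinf Q * qfinf Q)"
    by (intro tendsto_intros qf_lim_lin Q) (use qfinf_nz[OF Q] in auto)
  then have "(\<lambda>N. gb Q (2*(N+n)) ((N+n)+n)) \<longlonglongrightarrow> 1 / qfinf Q"
    using qfinf_nz[OF Q] by (simp only: e) simp
  then show ?thesis by (rule LIMSEQ_offset)
qed

lemma gb_lim2: "norm (Q::complex) < 1 \<Longrightarrow> (\<lambda>N. gb Q (2*N) (N - Suc n)) \<longlonglongrightarrow> 1 / qfinf Q"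
proof -
  assume Q: "norm Q < 1"
  have e: "gb Q (2*(N+Suc n)) ((N+Suc n) - Suc n) = qf Q (2*N + 2*Suc n) / (qf Q (1*N + 0) * qf Q (1*N + 2 * Suc n))" for N
  proof -
    have k: "(N+Suc n) - Suc n = 1*N + 0" and m: "2*(N+Suc n) = 2*N+2*Suc n" by simp_all
    have d: "(2*N+2*Suc n) - (1*N+0) = 1*N + 2*Suc n" by simp
    have le: "1*N + 0 \<le> 2*N+2*Suc n" by simp
    have nz: "qf Q k \<noteq> 0" for k using qf_lower[OF Q, of k] rm_pos[of "norm Q"] Q by auto
    show ?thesis unfolding k m using gb_closed[OF le, of Q] nz unfolding d
      by (simp add: field_simps)
  qed
  have "(\<lambda>N. qf Q (2*N + 2*Suc n) / (qf Q (1*N + 0) * qf Q (1*N + 2 * Suc n))) \<longlonglongrightarrow> qfinf Q / (qfinf Q * qfinf Q)"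
    by (intro tendsto_intros qf_lim_lin Q) (use qfinf_nz[OF Q] in auto)
  then have "(\<lambda>N. gb Q (2*(N+Suc n)) ((N+Suc n) - Suc n)) \<longlonglongrightarrow> 1 / qfinf Q"
    using qfinf_nz[OF Q] by (simp only: e) simp
  then show ?thesis by (rule LIMSEQ_offset)
qed

lemma summable_sq:
  fixes r c :: real
  assumes r: "0 \<le> r" "r < 1" and c: "0 \<le> c"
  shows "summable (\<lambda>n. r^(n*n) * c^n)"
proof (rule summable_comparison_test_ev)
  have "(\<lambda>n. r^n * c) \<longlonglongrightarrow> 0 * c"
    by (intro tendsto_intros LIMSEQ_power_zero) (use r in auto)
  then have "eventually (\<lambda>n. r^n * c < 1/2) sequentially"
    by (intro order_tendstoD) auto
  then show "eventually (\<lambda>n. norm (r^(n*n) * c^n) \<le> (1/2)^n) sequentially"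
  proof eventually_elim
    case (elim n)
    have "norm (r^(n*n) * c^n) = (r^n * c)^n"
      using r c by (simp add: power_mult power_mult_distrib)
    also have "\<dots> \<le> (1/2)^n"
      by (rule power_mono) (use elim r c in auto)
    finally show ?case .
  qed
qed (simp add: summable_geometric)

lemma convergent_prod_geomw:
  fixes x w :: complex
  assumes "norm x < 1"
  shows "convergent_prod (\<lambda>n. 1 + x^(2*n+1) * w)"
proof (rule cprod_summable)
  have "summable (\<lambda>n. (norm x * norm w) * (norm x ^ 2)^n)"
    by (intro summable_mult summable_geometric) (use assms in \<open>auto simp: abs_square_less_1\<close>)
  moreover have "norm (x^(2*n+1) * w) = (norm x * norm w) * (norm x ^ 2)^n" for n
    by (simp add: norm_mult norm_power power_add power_mult[symmetric])
  ultimately show "summable (\<lambda>n. norm (x^(2*n+1) * w))" by simp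
qed

definition jprod :: "complex \<Rightarrow> complex \<Rightarrow> complex" where
  "jprod x w = (\<Prod>n. (1 + x^(2*n+1) * w) * (1 + x^(2*n+1) / w))"

lemma jprod_conv:
  assumes "norm (x::complex) < 1"
  shows "convergent_prod (\<lambda>n. (1 + x^(2*n+1) * w) * (1 + x^(2*n+1) / w))"
  using convergent_prod_mult[OF convergent_prod_geomw[OF assms, of w] convergent_prod_geomw[OF assms, of "1/w"]]
  by simp

lemma jtp:
  fixes x w :: complex
  assumes x0: "x \<noteq> 0" and x1: "norm x < 1" and w0: "w \<noteq> 0"
  shows "(\<lambda>n. x^(n*n) * w^n + x^(Suc n * Suc n) * (1/w)^(Suc n)) sums (qfinf (x^2) * jprod x w)"
proof -
  define Q where "Q = x^2"
  have nQ: "norm Q < 1" using x1 by (simp add: Q_def norm_power abs_square_less_1)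
  define B where "B = rp (norm Q) / (rm (norm Q) * rm (norm Q))"
  have gbB: "norm (gb Q n k) \<le> B" for n k unfolding B_def by (rule gb_bound[OF nQ])
  have B0: "0 \<le> B" using gbB[of 0 0] by simp
  define qi where "qi = qfinf Q"
  have qi0: "qi \<noteq> 0" unfolding qi_def by (rule qfinf_nz[OF nQ])
  define u where "u n = x^(n*n) * w^n" for n
  define v where "v n = x^(Suc n * Suc n) * (1/w)^(Suc n)" for n
  define a where "a n N = (if n \<le> N then u n * gb Q (2*N) (N+n) else 0)
     + (if n < N then v n * gb Q (2*N) (N - Suc n) else 0)" for n N
  define P where "P N = (\<Prod>k<N. (1 + x^(2*k+1) * w) * (1 + x^(2*k+1) / w))" for N
  have fin: "suminf (\<lambda>n. a n N) = P N" for N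
  proof -
    have "suminf (\<lambda>n. a n N) = (\<Sum>n\<in>{..<Suc N}. a n N)"
      by (rule suminf_finite) (auto simp: a_def)
    also have "\<dots> = (\<Sum>n\<le>N. u n * gb Q (2*N) (N+n)) + (\<Sum>n<N. v n * gb Q (2*N) (N - Suc n))"
    proof -
      have "(\<Sum>n\<in>{..<Suc N}. a n N) = (\<Sum>n<Suc N. u n * gb Q (2*N) (N+n))
          + (\<Sum>n<Suc N. (if n < N then v n * gb Q (2*N) (N - Suc n) else 0))"
        unfolding a_def by (simp add: sum.distrib)
      also have "(\<Sum>n<Suc N. (if n < N then v n * gb Q (2*N) (N - Suc n) else 0))
          = (\<Sum>n<N. v n * gb Q (2*N) (N - Suc n))"
        by (simp add: sum.lessThan_Suc)
      finally show ?thesis by (simp add: lessThan_Suc_atMost)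
    qed
    also have "\<dots> = P N"
      unfolding P_def u_def v_def Q_def by (rule jtp_finite[OF x0 w0, symmetric])
    finally show ?thesis .
  qed
  define M where "M n = B * (norm x^(n*n) * norm w^n + norm x^(Suc n * Suc n) * norm (1/w)^(Suc n))" for n
  have bound: "norm (a n N) \<le> M n" for n N
  proof -
    have "norm (a n N) \<le> norm (if n \<le> N then u n * gb Q (2*N) (N+n) else 0)
        + norm (if n < N then v n * gb Q (2*N) (N - Suc n) else 0)"
      unfolding a_def by (rule norm_triangle_ineq)
    also have "\<dots> \<le> norm (u n) * B + norm (v n) * B"
      by (intro add_mono) (auto simp: norm_mult B0 intro!: mult_left_mono gbB)
    also have "\<dots> = M n"
      by (simp add: M_def u_def v_def norm_mult norm_power norm_divide algebra_simps)
    finally show ?thesis .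
  qed
  have sM: "summable M"
  proof -
    have s1: "summable (\<lambda>n. norm x^(n*n) * norm w^n)"
      by (rule summable_sq) (use x1 in auto)
    have s2: "summable (\<lambda>n. norm x^(n*n) * norm (1/w)^n)"
      by (rule summable_sq) (use x1 in auto)
    then have s2': "summable (\<lambda>n. norm x^(Suc n * Suc n) * norm (1/w)^(Suc n))"
      by (subst summable_Suc_iff[where f="\<lambda>n. norm x^(n*n) * norm (1/w)^n"])
    show ?thesis unfolding M_def by (intro summable_mult summable_add s1 s2')
  qed
  define b where "b n = u n / qi + v n / qi" for n
  have lim: "(\<lambda>N. a n N) \<longlonglongrightarrow> b n" for n
  proof -
    have "(\<lambda>N. u n * gb Q (2*N) (N+n) + v n * gb Q (2*N) (N - Suc n)) \<longlonglongrightarrow> u n * (1/qi) + v n * (1/qi)"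
      unfolding qi_def by (intro tendsto_intros gb_lim1[OF nQ] gb_lim2[OF nQ])
    moreover have "eventually (\<lambda>N. u n * gb Q (2*N) (N+n) + v n * gb Q (2*N) (N - Suc n) = a n N) sequentially"
      unfolding a_def using eventually_ge_at_top[of "Suc n"] by eventually_elim auto
    ultimately show ?thesis unfolding b_def by (simp add: tendsto_cong)
  qed
  have T: "((\<lambda>N. suminf (\<lambda>n. a n N)) \<longlonglongrightarrow> suminf b) \<and> summable (\<lambda>n. norm (b n))"
    using tannerys_theorem[of a b sequentially M, OF lim _ sM] bound
    by (auto intro: always_eventually)
  have "P \<longlonglongrightarrow> suminf b" using T fin by simp
  moreover have "P \<longlonglongrightarrow> jprod x w"
  proof -
    have "(\<lambda>n. \<Prod>i\<le>n. (1 + x^(2*i+1) * w) * (1 + x^(2*i+1) / w)) \<longlonglongrightarrow> jprod x w"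
      unfolding jprod_def by (rule convergent_prod_LIMSEQ[OF jprod_conv[OF x1]])
    then have "(\<lambda>n. P (Suc n)) \<longlonglongrightarrow> jprod x w"
      by (simp add: P_def lessThan_Suc_atMost)
    then show ?thesis by (rule filterlim_sequentially_Suc[THEN iffD1])
  qed
  ultimately have sb: "suminf b = jprod x w" by (rule LIMSEQ_unique)
  have sbb: "summable b" using T summable_norm_cancel by blast
  then have "b sums jprod x w" using sb summable_sums by metis
  then have "(\<lambda>n. qi * b n) sums (qi * jprod x w)" by (rule sums_mult)
  moreover have "qi * b n = x^(n*n) * w^n + x^(Suc n * Suc n) * (1/w)^(Suc n)" for n
    using qi0 by (simp add: b_def u_def v_def field_simps)
  ultimately show ?thesis by (simp add: qi_def Q_def)
qed




lemma int_split_has_sum: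
  fixes g :: "int \<Rightarrow> complex"
  assumes s1: "summable (\<lambda>n. norm (g (int n)))"
      and s2: "summable (\<lambda>n. norm (g (- int (Suc n))))"
  shows "(g has_sum (\<Sum>n. g (int n) + g (- int (Suc n)))) UNIV"
proof -
  have h1: "((g \<circ> int) has_sum (\<Sum>n. g (int n))) UNIV"
    unfolding o_def by (rule norm_summable_imp_has_sum[OF s1 summable_sums[OF summable_norm_cancel[OF s1]]])
  have h2: "((g \<circ> (\<lambda>n. - int (Suc n))) has_sum (\<Sum>n. g (- int (Suc n)))) UNIV"
    unfolding o_def by (rule norm_summable_imp_has_sum[OF s2 summable_sums[OF summable_norm_cancel[OF s2]]])
  have A: "(g has_sum (\<Sum>n. g (int n))) (range int)"
    using has_sum_reindex[of int UNIV g] h1 by simp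
  have inj2: "inj (\<lambda>n. - int (Suc n))" by (auto simp: inj_def)
  have B: "(g has_sum (\<Sum>n. g (- int (Suc n)))) (range (\<lambda>n. - int (Suc n)))"
    using has_sum_reindex[OF inj2, of g] h2 by simp
  have U: "range int \<union> range (\<lambda>n. - int (Suc n)) = UNIV"
  proof -
    have "k \<in> range int \<union> range (\<lambda>n. - int (Suc n))" for k :: int
    proof (cases "k \<ge> 0")
      case True
      then have "k = int (nat k)" by simp
      then show ?thesis by blast
    next
      case False
      then have "k = - int (Suc (nat (- k - 1)))" by simp
      then show ?thesis by blast
    qed
    then show ?thesis by blast
  qed
  have D: "range int \<inter> range (\<lambda>n. - int (Suc n)) = {}" by auto
  have "(g has_sum ((\<Sum>n. g (int n)) + (\<Sum>n. g (- int (Suc n))))) UNIV"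
    using has_sum_Un_disjoint[OF A B D] U by simp
  moreover have "(\<Sum>n. g (int n)) + (\<Sum>n. g (- int (Suc n))) = (\<Sum>n. g (int n) + g (- int (Suc n)))"
    by (rule suminf_add) (use s1 s2 summable_norm_cancel in auto)
  ultimately show ?thesis by simp
qed

lemma holo_suminf:
  fixes f :: "nat \<Rightarrow> complex \<Rightarrow> complex"
  assumes hol: "\<And>n. f n holomorphic_on UNIV"
      and bnd: "\<And>R. \<exists>M. summable M \<and> (\<forall>n z. norm z \<le> R \<longrightarrow> norm (f n z) \<le> M n)"
  shows "(\<lambda>z. \<Sum>n. f n z) holomorphic_on UNIV"
proof (rule holomorphic_uniform_sequence[where f="\<lambda>N z. \<Sum>n<N. f n z"])
  fix N show "(\<lambda>z. \<Sum>n<N. f n z) holomorphic_on UNIV"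
    by (intro holomorphic_on_sum) (use hol in auto)
next
  fix x :: complex
  obtain M where M: "summable M" "\<And>n z. norm z \<le> norm x + 1 \<Longrightarrow> norm (f n z) \<le> M n"
    using bnd[of "norm x + 1"] by blast
  have "uniform_limit (cball x 1) (\<lambda>N z. \<Sum>n<N. f n z) (\<lambda>z. \<Sum>n. f n z) sequentially"
  proof (rule Weierstrass_m_test[OF _ M(1)])
    fix n z assume "z \<in> cball x 1"
    then have d: "norm (z - x) \<le> 1" by (simp add: dist_norm norm_minus_commute)
    have "norm z \<le> norm x + norm (z - x)" by (rule norm_triangle_sub)
    then have "norm z \<le> norm x + 1" using d by simp
    then show "norm (f n z) \<le> M n" by (rule M(2))
  qed
  then show "\<exists>d>0. cball x d \<subseteq> UNIV \<and> uniform_limit (cball x d) (\<lambda>N z. \<Sum>n<N. f n z) (\<lambda>z. \<Sum>n. f n z) sequentially"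
    by (intro exI[of _ 1]) auto
qed auto

definition tm :: "complex \<Rightarrow> complex \<Rightarrow> int \<Rightarrow> complex" where
  "tm \<sigma> z n = exp (of_real pi * \<i> * (of_int n)^2 * \<sigma> + 2 * of_real pi * \<i> * of_int n * z)"

definition thS :: "complex \<Rightarrow> complex \<Rightarrow> complex" where
  "thS \<sigma> z = infsum (tm \<sigma> z) UNIV"

definition nx :: "complex \<Rightarrow> complex" where "nx \<sigma> = exp (of_real pi * \<i> * \<sigma>)"
definition nw :: "complex \<Rightarrow> complex" where "nw z = exp (2 * of_real pi * \<i> * z)"

lemma tm_pos: "tm \<sigma> z (int n) = nx \<sigma> ^ (n*n) * nw z ^ n"
proof -
  have A: "of_real pi * \<i> * (of_int (int n))^2 * \<sigma> = of_nat (n*n) * (of_real pi * \<i> * \<sigma>)"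
    by (simp add: power2_eq_square mult_ac)
  have B: "2 * of_real pi * \<i> * of_int (int n) * z = of_nat n * (2 * of_real pi * \<i> * z)"
    by (simp add: mult_ac)
  show ?thesis unfolding tm_def A B exp_add exp_of_nat_mult nx_def nw_def ..
qed

lemma tm_neg: "tm \<sigma> z (- int (Suc n)) = nx \<sigma> ^ (Suc n * Suc n) * (1 / nw z) ^ (Suc n)"
proof -
  have A: "of_real pi * \<i> * (of_int (- int (Suc n)))^2 * \<sigma> = of_nat (Suc n * Suc n) * (of_real pi * \<i> * \<sigma>)"
    by (simp only: of_int_minus minus_mult_minus of_int_of_nat_eq power2_eq_square of_nat_mult mult_ac)
  have B: "2 * of_real pi * \<i> * of_int (- int (Suc n)) * z = of_nat (Suc n) * (- (2 * of_real pi * \<i> * z))"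
    by (simp only: of_int_minus of_int_of_nat_eq mult_ac mult_minus_left mult_minus_right)
  have C: "exp (- (2 * of_real pi * \<i> * z)) = 1 / nw z"
    by (simp add: nw_def exp_minus inverse_eq_divide)
  show ?thesis unfolding tm_def A B exp_add exp_of_nat_mult C nx_def ..
qed

lemma norm_nx: "norm (nx \<sigma>) = exp (- pi * Im \<sigma>)"
  by (simp add: nx_def norm_exp_eq_Re)

lemma norm_nw: "norm (nw z) = exp (- 2 * pi * Im z)"
  by (simp add: nw_def norm_exp_eq_Re)

lemma nx_lt1: "Im \<sigma> > 0 \<Longrightarrow> norm (nx \<sigma>) < 1"
  by (simp add: norm_nx)

lemma nx_nz: "nx \<sigma> \<noteq> 0" by (simp add: nx_def)
lemma nw_nz: "nw z \<noteq> 0" by (simp add: nw_def)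

lemma tm_summable:
  assumes "Im \<sigma> > 0"
  shows "summable (\<lambda>n. norm (tm \<sigma> z (int n)))" "summable (\<lambda>n. norm (tm \<sigma> z (- int (Suc n))))"
proof -
  have x: "0 \<le> norm (nx \<sigma>)" "norm (nx \<sigma>) < 1" using nx_lt1[OF assms] by auto
  have E1: "(\<lambda>n. norm (tm \<sigma> z (int n))) = (\<lambda>n. norm (nx \<sigma>)^(n*n) * norm (nw z)^n)"
    by (simp only: tm_pos norm_mult norm_power)
  show "summable (\<lambda>n. norm (tm \<sigma> z (int n)))"
    unfolding E1 by (rule summable_sq[OF x norm_ge_zero])
  have "summable (\<lambda>n. norm (nx \<sigma>)^(n*n) * norm (1 / nw z)^n)"
    by (rule summable_sq[OF x norm_ge_zero])
  then have s: "summable (\<lambda>n. norm (nx \<sigma>)^(Suc n * Suc n) * norm (1 / nw z)^(Suc n))"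
    by (subst summable_Suc_iff[where f="\<lambda>n. norm (nx \<sigma>)^(n*n) * norm (1 / nw z)^n"])
  have E2: "(\<lambda>n. norm (tm \<sigma> z (- int (Suc n)))) = (\<lambda>n. norm (nx \<sigma>)^(Suc n * Suc n) * norm (1 / nw z)^(Suc n))"
    by (simp only: tm_neg norm_mult norm_power)
  show "summable (\<lambda>n. norm (tm \<sigma> z (- int (Suc n))))"
    unfolding E2 by (rule s)
qed

lemma thS_has_sum:
  assumes "Im \<sigma> > 0"
  shows "(tm \<sigma> z has_sum (\<Sum>n. tm \<sigma> z (int n) + tm \<sigma> z (- int (Suc n)))) UNIV"
  by (rule int_split_has_sum[OF tm_summable(1)[OF assms] tm_summable(2)[OF assms]])

lemma thS_eq_suminf:
  assumes "Im \<sigma> > 0"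
  shows "thS \<sigma> z = (\<Sum>n. tm \<sigma> z (int n) + tm \<sigma> z (- int (Suc n)))"
  unfolding thS_def by (rule infsumI[OF thS_has_sum[OF assms]])

lemma thS_sums:
  assumes "Im \<sigma> > 0"
  shows "(\<lambda>n. tm \<sigma> z (int n) + tm \<sigma> z (- int (Suc n))) sums thS \<sigma> z"
proof -
  have "summable (\<lambda>n. tm \<sigma> z (int n) + tm \<sigma> z (- int (Suc n)))"
    by (rule summable_add[OF summable_norm_cancel[OF tm_summable(1)[OF assms]] summable_norm_cancel[OF tm_summable(2)[OF assms]]])
  from summable_sums[OF this] show ?thesis unfolding thS_eq_suminf[OF assms] .
qed

lemma thS_summable_on:
  assumes "Im \<sigma> > 0"
  shows "tm \<sigma> z summable_on UNIV"
  using thS_has_sum[OF assms] unfolding summable_on_def by blast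

lemma thS_jtp:
  assumes "Im \<sigma> > 0"
  shows "thS \<sigma> z = qfinf (nx \<sigma> ^ 2) * jprod (nx \<sigma>) (nw z)"
proof -
  have S: "(\<lambda>n. nx \<sigma> ^ (n*n) * nw z ^ n + nx \<sigma> ^ (Suc n * Suc n) * (1 / nw z) ^ (Suc n)) sums
        (qfinf (nx \<sigma> ^ 2) * jprod (nx \<sigma>) (nw z))"
    by (rule jtp[OF nx_nz nx_lt1[OF assms] nw_nz])
  have E: "(\<lambda>n. tm \<sigma> z (int n) + tm \<sigma> z (- int (Suc n))) =
           (\<lambda>n. nx \<sigma> ^ (n*n) * nw z ^ n + nx \<sigma> ^ (Suc n * Suc n) * (1 / nw z) ^ (Suc n))"
    by (simp only: tm_pos tm_neg)
  show ?thesis using sums_unique2[OF thS_sums[OF assms, of z] S[folded E]] .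
qed

lemma bij_int_shift: "bij_betw (\<lambda>n::int. n + k) UNIV UNIV"
  by (rule bij_betw_byWitness[where f'="\<lambda>n. n - k"]) auto

lemma bij_int_uminus: "bij_betw (\<lambda>n::int. - n) UNIV UNIV"
  by (rule bij_betw_byWitness[where f'="\<lambda>n. - n"]) auto

lemma e2pi_int: "exp (2 * of_real pi * \<i> * of_int n) = 1"
  using exp_integer_2pi[of "of_int n"] by (simp add: mult_ac)

lemma thS_periodic: "thS \<sigma> (z + 1) = thS \<sigma> z"
proof -
  have "tm \<sigma> (z + 1) n = tm \<sigma> z n" for n
  proof -
    have "of_real pi * \<i> * (of_int n)^2 * \<sigma> + 2 * of_real pi * \<i> * of_int n * (z + 1)
        = (of_real pi * \<i> * (of_int n)^2 * \<sigma> + 2 * of_real pi * \<i> * of_int n * z)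
          + 2 * of_real pi * \<i> * of_int n"
      by (simp add: algebra_simps)
    then show ?thesis unfolding tm_def by (simp only: exp_add e2pi_int mult_1_right)
  qed
  then have "tm \<sigma> (z + 1) = tm \<sigma> z" by (rule ext)
  then show ?thesis unfolding thS_def by simp
qed

lemma thS_periodic_nat: "thS \<sigma> (z + of_nat k) = thS \<sigma> z"
proof (induction k)
  case (Suc k)
  have "thS \<sigma> (z + of_nat (Suc k)) = thS \<sigma> ((z + of_nat k) + 1)"
    by (simp add: algebra_simps)
  also have "\<dots> = thS \<sigma> (z + of_nat k)" by (rule thS_periodic)
  finally show ?case using Suc by simp
qed simp

lemma thS_periodic_int: "thS \<sigma> (z + of_int m) = thS \<sigma> z"
proof (cases "m \<ge> 0")
  case True
  then have "of_int m = (of_nat (nat m) :: complex)" by simp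
  then show ?thesis by (simp add: thS_periodic_nat)
next
  case False
  then have m: "of_int m = - (of_nat (nat (- m)) :: complex)" by simp
  have "thS \<sigma> ((z + of_int m) + of_nat (nat (- m))) = thS \<sigma> (z + of_int m)"
    by (rule thS_periodic_nat)
  then show ?thesis unfolding m by simp
qed

lemma thS_quasi: "thS \<sigma> (z + \<sigma>) = exp (- of_real pi * \<i> * \<sigma> - 2 * of_real pi * \<i> * z) * thS \<sigma> z"
proof -
  define c where "c = exp (- of_real pi * \<i> * \<sigma> - 2 * of_real pi * \<i> * z)"
  have t: "tm \<sigma> (z + \<sigma>) n = c * tm \<sigma> z (n + 1)" for n
  proof -
    have "of_real pi * \<i> * (of_int n)^2 * \<sigma> + 2 * of_real pi * \<i> * of_int n * (z + \<sigma>)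
        = (- of_real pi * \<i> * \<sigma> - 2 * of_real pi * \<i> * z) +
          (of_real pi * \<i> * (of_int (n+1))^2 * \<sigma> + 2 * of_real pi * \<i> * of_int (n+1) * z)"
      by (simp add: algebra_simps power2_eq_square)
    then show ?thesis unfolding tm_def c_def by (simp only: exp_add)
  qed
  have "tm \<sigma> (z + \<sigma>) = (\<lambda>n. c * tm \<sigma> z (n + 1))" by (rule ext) (rule t)
  then have "thS \<sigma> (z + \<sigma>) = infsum (\<lambda>n. c * tm \<sigma> z (n + 1)) UNIV"
    unfolding thS_def by simp
  also have "\<dots> = c * infsum (\<lambda>n. tm \<sigma> z (n + 1)) UNIV"
    by (rule infsum_cmult_right')
  also have "infsum (\<lambda>n. tm \<sigma> z (n + 1)) UNIV = thS \<sigma> z"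
    unfolding thS_def by (rule infsum_reindex_bij_betw[OF bij_int_shift])
  finally show ?thesis by (simp add: c_def)
qed

lemma thS_even: "thS \<sigma> (- z) = thS \<sigma> z"
proof -
  have t: "tm \<sigma> (- z) n = tm \<sigma> z (- n)" for n
    unfolding tm_def by (simp add: power2_eq_square)
  have "tm \<sigma> (- z) = (\<lambda>n. tm \<sigma> z (- n))" by (rule ext) (rule t)
  then have "thS \<sigma> (- z) = infsum (\<lambda>n. tm \<sigma> z (- n)) UNIV"
    unfolding thS_def by simp
  also have "\<dots> = thS \<sigma> z"
    unfolding thS_def by (rule infsum_reindex_bij_betw[OF bij_int_uminus])
  finally show ?thesis .
qed

lemma thS_holo:
  assumes "Im \<sigma> > 0"
  shows "(\<lambda>z. thS \<sigma> z) holomorphic_on UNIV"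
proof -
  have E: "(\<lambda>z. thS \<sigma> z) = (\<lambda>z. \<Sum>n. tm \<sigma> z (int n) + tm \<sigma> z (- int (Suc n)))"
    using thS_eq_suminf[OF assms] by blast
  show ?thesis unfolding E
  proof (rule holo_suminf)
    fix n
    show "(\<lambda>z. tm \<sigma> z (int n) + tm \<sigma> z (- int (Suc n))) holomorphic_on UNIV"
      unfolding tm_def by (intro holomorphic_intros)
  next
    fix R :: real
    have x: "0 \<le> norm (nx \<sigma>)" "norm (nx \<sigma>) < 1" using nx_lt1[OF assms] by auto
    define c where "c = exp (2 * pi * R)"
    have c0: "0 \<le> c" by (simp add: c_def)
    define M where "M n = norm (nx \<sigma>)^(n*n) * c^n + norm (nx \<sigma>)^(Suc n * Suc n) * c^(Suc n)" for n
    have sM: "summable M"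
    proof -
      have s1: "summable (\<lambda>n. norm (nx \<sigma>)^(n*n) * c^n)" by (rule summable_sq[OF x c0])
      then have s2: "summable (\<lambda>n. norm (nx \<sigma>)^(Suc n * Suc n) * c^(Suc n))"
        by (subst summable_Suc_iff[where f="\<lambda>n. norm (nx \<sigma>)^(n*n) * c^n"])
      show ?thesis unfolding M_def by (rule summable_add[OF s1 s2])
    qed
    have "norm (tm \<sigma> z (int n) + tm \<sigma> z (- int (Suc n))) \<le> M n" if z: "norm z \<le> R" for n z
    proof -
      have i1: "- Im z \<le> R" "Im z \<le> R" using abs_Im_le_cmod[of z] z by auto
      have p1: "pi * (- Im z) \<le> pi * R" by (rule mult_left_mono[OF i1(1)]) simp
      have p2: "pi * Im z \<le> pi * R" by (rule mult_left_mono[OF i1(2)]) simp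
      have w1: "norm (nw z) \<le> c" unfolding norm_nw c_def using p1 by (simp add: mult.commute)
      have w2: "norm (1 / nw z) \<le> c" unfolding norm_divide norm_nw c_def using p2
        by (simp add: exp_minus[symmetric] inverse_eq_divide[symmetric] mult.commute)
      have "norm (tm \<sigma> z (int n) + tm \<sigma> z (- int (Suc n))) \<le> norm (tm \<sigma> z (int n)) + norm (tm \<sigma> z (- int (Suc n)))"
        by (rule norm_triangle_ineq)
      also have "norm (tm \<sigma> z (int n)) = norm (nx \<sigma>)^(n*n) * norm (nw z)^n"
        by (simp only: tm_pos norm_mult norm_power)
      also have "norm (tm \<sigma> z (- int (Suc n))) = norm (nx \<sigma>)^(Suc n * Suc n) * norm (1 / nw z)^(Suc n)"
        by (simp only: tm_neg norm_mult norm_power)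
      also have "norm (nx \<sigma>)^(n*n) * norm (nw z)^n + norm (nx \<sigma>)^(Suc n * Suc n) * norm (1 / nw z)^(Suc n) \<le> M n"
        unfolding M_def
        by (intro add_mono mult_left_mono power_mono w1 w2 norm_ge_zero zero_le_power)
      finally show ?thesis .
    qed
    then show "\<exists>M. summable M \<and> (\<forall>n z. norm z \<le> R \<longrightarrow> norm (tm \<sigma> z (int n) + tm \<sigma> z (- int (Suc n))) \<le> M n)"
      using sM by blast
  qed
qed




lemma prodinf_head:
  fixes f :: "nat \<Rightarrow> complex"
  assumes "convergent_prod f" "convergent_prod (\<lambda>n. f (Suc n))"
  shows "prodinf f = f 0 * prodinf (\<lambda>n. f (Suc n))"
proof -
  have a: "(\<lambda>n. \<Prod>i\<le>Suc n. f i) \<longlonglongrightarrow> prodinf f"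
    using convergent_prod_LIMSEQ[OF assms(1)] by (rule filterlim_sequentially_Suc[THEN iffD2])
  have "(\<lambda>n. f 0 * (\<Prod>i\<le>n. f (Suc i))) \<longlonglongrightarrow> f 0 * prodinf (\<lambda>n. f (Suc n))"
    by (intro tendsto_intros convergent_prod_LIMSEQ[OF assms(2)])
  moreover have "(\<Prod>i\<le>Suc n. f i) = f 0 * (\<Prod>i\<le>n. f (Suc i))" for n
    by (rule prod.atMost_Suc_shift)
  ultimately have "(\<lambda>n. \<Prod>i\<le>Suc n. f i) \<longlonglongrightarrow> f 0 * prodinf (\<lambda>n. f (Suc n))" by simp
  with a show ?thesis by (rule LIMSEQ_unique)
qed

lemma holo_prodinf:
  fixes f :: "nat \<Rightarrow> complex \<Rightarrow> complex"
  assumes hol: "\<And>n. f n holomorphic_on UNIV"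
      and bnd: "\<And>R. \<exists>M. summable M \<and> (\<forall>n z. norm z \<le> R \<longrightarrow> norm (f n z) \<le> M n)"
  shows "(\<lambda>z. \<Prod>n. 1 + f n z) holomorphic_on UNIV"
    and "\<And>z. convergent_prod (\<lambda>n. 1 + f n z)"
proof -
  show cp: "convergent_prod (\<lambda>n. 1 + f n z)" for z
  proof -
    obtain M where M: "summable M" "\<And>n z'. norm z' \<le> norm z \<Longrightarrow> norm (f n z') \<le> M n"
      using bnd[of "norm z"] by blast
    have "summable (\<lambda>n. norm (f n z))"
      by (rule summable_comparison_test[OF _ M(1)]) (use M(2) in auto)
    then show ?thesis by (rule cprod_summable)
  qed
  show "(\<lambda>z. \<Prod>n. 1 + f n z) holomorphic_on UNIV"
  proof (rule holomorphic_uniform_sequence[where f="\<lambda>N z. \<Prod>n<N. 1 + f n z"])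
    fix N show "(\<lambda>z. \<Prod>n<N. 1 + f n z) holomorphic_on UNIV"
      by (intro holomorphic_on_prod holomorphic_on_add holomorphic_on_const) (use hol in auto)
  next
    fix x :: complex
    obtain M where M: "summable M" "\<And>n z. norm z \<le> norm x + 1 \<Longrightarrow> norm (f n z) \<le> M n"
      using bnd[of "norm x + 1"] by blast
    have inb: "norm z \<le> norm x + 1" if "z \<in> cball x 1" for z
    proof -
      have d: "norm (z - x) \<le> 1" using that by (simp add: dist_norm norm_minus_commute)
      have "norm z \<le> norm x + norm (z - x)" by (rule norm_triangle_sub)
      then show ?thesis using d by simp
    qed
    have uc: "uniformly_convergent_on (cball x 1) (\<lambda>N z. \<Prod>n<N. 1 + f n z)"
    proof (rule uniformly_convergent_on_prod)
      fix n show "continuous_on (cball x 1) (f n)"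
        using hol holomorphic_on_imp_continuous_on holomorphic_on_subset by blast
    next
      show "compact (cball x 1)" by simp
    next
      show "uniformly_convergent_on (cball x 1) (\<lambda>N z. \<Sum>n<N. norm (f n z))"
        by (rule Weierstrass_m_test'[OF _ M(1)]) (use M(2) inb in auto)
    qed
    then obtain g where g: "uniform_limit (cball x 1) (\<lambda>N z. \<Prod>n<N. 1 + f n z) g sequentially"
      by (auto simp: uniformly_convergent_on_def)
    have "uniform_limit (cball x 1) (\<lambda>N z. \<Prod>n<N. 1 + f n z) (\<lambda>z. \<Prod>n. 1 + f n z) sequentially"
    proof -
      have "g z = (\<Prod>n. 1 + f n z)" if "z \<in> cball x 1" for z
      proof -
        have "(\<lambda>N. \<Prod>n<N. 1 + f n z) \<longlonglongrightarrow> g z"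
          using g that by (rule tendsto_uniform_limitI)
        then have a: "(\<lambda>N. \<Prod>n<Suc N. 1 + f n z) \<longlonglongrightarrow> g z"
          by (rule filterlim_sequentially_Suc[THEN iffD2])
        have b: "(\<lambda>N. \<Prod>n<Suc N. 1 + f n z) \<longlonglongrightarrow> (\<Prod>n. 1 + f n z)"
          using convergent_prod_LIMSEQ[OF cp[of z]] by (simp add: lessThan_Suc_atMost)
        show ?thesis using LIMSEQ_unique[OF a b] .
      qed
      then show ?thesis using g uniform_limit_cong'[where X="cball x 1" and f="\<lambda>N z. \<Prod>n<N. 1 + f n z"
          and g="\<lambda>N z. \<Prod>n<N. 1 + f n z" and h=g and i="\<lambda>z. \<Prod>n. 1 + f n z" and F=sequentially]
        by blast
    qed
    then show "\<exists>d>0. cball x d \<subseteq> UNIV \<and> uniform_limit (cball x d) (\<lambda>N z. \<Prod>n<N. 1 + f n z) (\<lambda>z. \<Prod>n. 1 + f n z) sequentially"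
      by (intro exI[of _ 1]) auto
  qed auto
qed

lemma lattice_sep:
  fixes \<sigma> :: complex
  assumes "Im \<sigma> > 0" "a \<noteq> 0 \<or> b \<noteq> 0"
  shows "norm (of_int a + of_int b * \<sigma>) \<ge> min 1 (Im \<sigma>)"
proof (cases "b = 0")
  case True
  then have "a \<noteq> 0" using assms by simp
  then have "norm (of_int a :: complex) \<ge> 1" by simp
  then show ?thesis using True by simp
next
  case False
  have "\<bar>Im (of_int a + of_int b * \<sigma>)\<bar> = \<bar>of_int b\<bar> * Im \<sigma>" using assms by (simp add: abs_mult)
  also have "\<dots> \<ge> 1 * Im \<sigma>"
    by (rule mult_right_mono) (use False assms in auto)
  finally have "\<bar>Im (of_int a + of_int b * \<sigma>)\<bar> \<ge> Im \<sigma>" by simp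
  then have "norm (of_int a + of_int b * \<sigma>) \<ge> Im \<sigma>" using abs_Im_le_cmod order_trans by blast
  then show ?thesis by simp
qed

lemma per_int:
  fixes h :: "complex \<Rightarrow> 'b"
  assumes "\<And>z. h (z + a) = h z"
  shows "h (z + of_int k * a) = h z"
proof -
  have P: "h (z + of_nat n * a) = h z" for n z
  proof (induction n)
    case (Suc n)
    have "h (z + of_nat (Suc n) * a) = h ((z + of_nat n * a) + a)" by (simp add: algebra_simps)
    also have "\<dots> = h (z + of_nat n * a)" by (rule assms)
    finally show ?case using Suc by simp
  qed simp
  show ?thesis
  proof (cases "k \<ge> 0")
    case True
    then have "of_int k = (of_nat (nat k) :: complex)" by simp
    then show ?thesis using P by simp
  next
    case False
    then have k: "of_int k = - (of_nat (nat (- k)) :: complex)" by simp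
    have "h ((z + of_int k * a) + of_nat (nat (- k)) * a) = h (z + of_int k * a)" by (rule P)
    then show ?thesis unfolding k by (simp add: algebra_simps)
  qed
qed

lemma zero_inv:
  fixes g :: "complex \<Rightarrow> complex"
  assumes ga: "\<And>z. g (z + a) = e z * g z" and en: "\<And>z. e z \<noteq> 0"
  shows "g (z + of_int k * a) = 0 \<longleftrightarrow> g z = 0"
proof -
  have "(g (z + a) = 0) = (g z = 0)" for z using ga[of z] en[of z] by simp
  then show ?thesis using per_int[of "\<lambda>z. g z = 0" a z k] by simp
qed

definition Ef :: "complex \<Rightarrow> complex \<Rightarrow> complex" where
  "Ef \<sigma> z = 1 + nx \<sigma> / nw z"

definition PA :: "complex \<Rightarrow> complex \<Rightarrow> complex" where
  "PA \<sigma> z = (\<Prod>n. 1 + nx \<sigma> ^ (2*n+1) * nw z)"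

definition PB :: "complex \<Rightarrow> complex \<Rightarrow> complex" where
  "PB \<sigma> z = (\<Prod>n. 1 + nx \<sigma> ^ (2*n+3) / nw z)"

definition P1 :: "complex \<Rightarrow> complex \<Rightarrow> complex" where
  "P1 \<sigma> z = qfinf (nx \<sigma> ^ 2) * PA \<sigma> z * PB \<sigma> z"

lemma PA_conv: "Im \<sigma> > 0 \<Longrightarrow> convergent_prod (\<lambda>n. 1 + nx \<sigma> ^ (2*n+1) * nw z)"
  by (rule convergent_prod_geomw[OF nx_lt1])

lemma PBfull_conv: "Im \<sigma> > 0 \<Longrightarrow> convergent_prod (\<lambda>n. 1 + nx \<sigma> ^ (2*n+1) / nw z)"
  using convergent_prod_geomw[OF nx_lt1, of \<sigma> "1 / nw z"] by simp

lemma th_factor: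
  assumes "Im \<sigma> > 0"
  shows "thS \<sigma> z = Ef \<sigma> z * P1 \<sigma> z"
proof -
  define B where "B n = 1 + nx \<sigma> ^ (2*n+1) / nw z" for n
  have cB: "convergent_prod B" unfolding B_def by (rule PBfull_conv[OF assms])
  have cB1: "convergent_prod (\<lambda>n. B (Suc n))"
    using cB convergent_prod_iff_shift[of B 1] by simp
  have "jprod (nx \<sigma>) (nw z) = PA \<sigma> z * prodinf B"
    unfolding jprod_def PA_def B_def
    by (rule prodinf_mult[symmetric, OF PA_conv[OF assms] PBfull_conv[OF assms]])
  also have "prodinf B = B 0 * prodinf (\<lambda>n. B (Suc n))"
    by (rule prodinf_head[OF cB cB1])
  also have "B 0 = Ef \<sigma> z" by (simp add: B_def Ef_def)
  also have "prodinf (\<lambda>n. B (Suc n)) = PB \<sigma> z"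
  proof -
    have e: "2 * Suc n + 1 = 2*n+3" for n by simp
    show ?thesis unfolding PB_def B_def by (simp only: e)
  qed
  finally show ?thesis using thS_jtp[OF assms] by (simp add: P1_def algebra_simps)
qed

lemma nxk_nw: "nx \<sigma> ^ k * nw z = exp (of_nat k * (of_real pi * \<i> * \<sigma>) + 2 * of_real pi * \<i> * z)"
  by (simp add: nx_def nw_def exp_add exp_of_nat_mult)

lemma nxk_div_nw: "nx \<sigma> ^ k / nw z = exp (of_nat k * (of_real pi * \<i> * \<sigma>) - 2 * of_real pi * \<i> * z)"
  by (simp add: nx_def nw_def exp_diff exp_of_nat_mult)

lemma exp_eq_m1: "exp a = -1 \<Longrightarrow> \<exists>n::int. a = of_real pi * \<i> + of_int (2*n) * of_real pi * \<i>"
  using exp_eq[of a "of_real pi * \<i>"] by (auto simp: mult_ac)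

lemma two_pi_i_nz: "2 * of_real pi * \<i> \<noteq> (0::complex)" by simp

lemma zero_fac1:
  assumes "1 + nx \<sigma> ^ k * nw z = 0"
  shows "\<exists>n::int. z = 1/2 + of_int n - of_nat k * \<sigma> / 2"
proof -
  have "exp (of_nat k * (of_real pi * \<i> * \<sigma>) + 2 * of_real pi * \<i> * z) = -1"
    using assms unfolding nxk_nw by (simp add: add_eq_0_iff)
  then obtain n :: int where n: "of_nat k * (of_real pi * \<i> * \<sigma>) + 2 * of_real pi * \<i> * z
      = of_real pi * \<i> + of_int (2*n) * of_real pi * \<i>"
    using exp_eq_m1 by blast
  have "2 * of_real pi * \<i> * z = 2 * of_real pi * \<i> * (1/2 + of_int n - of_nat k * \<sigma> / 2)"
    using n by (simp add: algebra_simps)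
  then show ?thesis using two_pi_i_nz by (metis mult_left_cancel)
qed

lemma zero_fac2:
  assumes "1 + nx \<sigma> ^ k / nw z = 0"
  shows "\<exists>n::int. z = - 1/2 - of_int n + of_nat k * \<sigma> / 2"
proof -
  have "exp (of_nat k * (of_real pi * \<i> * \<sigma>) - 2 * of_real pi * \<i> * z) = -1"
    using assms unfolding nxk_div_nw by (simp add: add_eq_0_iff)
  then obtain n :: int where n: "of_nat k * (of_real pi * \<i> * \<sigma>) - 2 * of_real pi * \<i> * z
      = of_real pi * \<i> + of_int (2*n) * of_real pi * \<i>"
    using exp_eq_m1 by blast
  have "2 * of_real pi * \<i> * z = 2 * of_real pi * \<i> * (- 1/2 - of_int n + of_nat k * \<sigma> / 2)"
    using n by (simp add: algebra_simps)
  then show ?thesis using two_pi_i_nz by (metis mult_left_cancel)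
qed

lemma prodinf_zero_factor:
  fixes f :: "nat \<Rightarrow> complex"
  assumes "convergent_prod f" "prodinf f = 0"
  shows "\<exists>n. f n = 0"
  using prodinf_nonzero[OF assms(1)] assms(2) by blast

lemma thS_zero:
  assumes sp: "Im \<sigma> > 0" and z: "thS \<sigma> z = 0"
  shows "\<exists>m n::int. z = (1 + \<sigma>)/2 + of_int m + of_int n * \<sigma>"
proof -
  have "Ef \<sigma> z = 0 \<or> qfinf (nx \<sigma> ^ 2) = 0 \<or> PA \<sigma> z = 0 \<or> PB \<sigma> z = 0"
    using z th_factor[OF sp, of z] by (simp add: P1_def)
  moreover have "qfinf (nx \<sigma> ^ 2) \<noteq> 0"
    by (rule qfinf_nz) (use nx_lt1[OF sp] in \<open>simp add: norm_power abs_square_less_1\<close>)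
  ultimately consider "Ef \<sigma> z = 0" | "PA \<sigma> z = 0" | "PB \<sigma> z = 0" by blast
  then show ?thesis
  proof cases
    case 1
    then have "1 + nx \<sigma> ^ 1 / nw z = 0" by (simp add: Ef_def)
    then obtain n :: int where zn: "z = - 1/2 - of_int n + of_nat 1 * \<sigma> / 2" using zero_fac2 by blast
    have "- 1/2 - of_int n + of_nat 1 * \<sigma> / 2 = (1 + \<sigma>)/2 + of_int (- n - 1) + of_int 0 * \<sigma>"
      by (simp add: field_simps)
    then have "z = (1 + \<sigma>)/2 + of_int (- n - 1) + of_int 0 * \<sigma>" using zn by simp
    then show ?thesis by blast
  next
    case 2
    then obtain j where "1 + nx \<sigma> ^ (2*j+1) * nw z = 0"
      using prodinf_zero_factor[OF PA_conv[OF sp]] unfolding PA_def by blast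
    then obtain n :: int where zn: "z = 1/2 + of_int n - of_nat (2*j+1) * \<sigma> / 2" using zero_fac1 by blast
    have "1/2 + of_int n - of_nat (2*j+1) * \<sigma> / 2 = (1 + \<sigma>)/2 + of_int n + of_int (- int j - 1) * \<sigma>"
      by (simp add: field_simps)
    then have "z = (1 + \<sigma>)/2 + of_int n + of_int (- int j - 1) * \<sigma>" using zn by simp
    then show ?thesis by blast
  next
    case 3
    have e: "2 * (n + 1) + 1 = 2*n+3" for n :: nat by simp
    have cB: "convergent_prod (\<lambda>n. 1 + nx \<sigma> ^ (2*n+3) / nw z)"
      using PBfull_conv[OF sp, of z] convergent_prod_iff_shift[of "\<lambda>n. 1 + nx \<sigma> ^ (2*n+1) / nw z" 1]
      by (simp only: e)
    from 3 obtain j where "1 + nx \<sigma> ^ (2*j+3) / nw z = 0"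
      using prodinf_zero_factor[OF cB] unfolding PB_def by blast
    then obtain n :: int where zn: "z = - 1/2 - of_int n + of_nat (2*j+3) * \<sigma> / 2" using zero_fac2 by blast
    have "- 1/2 - of_int n + of_nat (2*j+3) * \<sigma> / 2 = (1 + \<sigma>)/2 + of_int (- n - 1) + of_int (int j + 1) * \<sigma>"
      by (simp add: field_simps)
    then have "z = (1 + \<sigma>)/2 + of_int (- n - 1) + of_int (int j + 1) * \<sigma>" using zn by simp
    then show ?thesis by blast
  qed
qed

lemma nw_bound:
  assumes "norm z \<le> R"
  shows "norm (nw z) \<le> exp (2 * pi * R)" "norm (1 / nw z) \<le> exp (2 * pi * R)"
proof -
  have i1: "- Im z \<le> R" "Im z \<le> R" using abs_Im_le_cmod[of z] assms by auto
  have p1: "pi * (- Im z) \<le> pi * R" by (rule mult_left_mono[OF i1(1)]) simp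
  have p2: "pi * Im z \<le> pi * R" by (rule mult_left_mono[OF i1(2)]) simp
  show "norm (nw z) \<le> exp (2 * pi * R)" unfolding norm_nw using p1 by (simp add: mult.commute)
  show "norm (1 / nw z) \<le> exp (2 * pi * R)" unfolding norm_divide norm_nw using p2
    by (simp add: exp_minus[symmetric] inverse_eq_divide[symmetric] mult.commute)
qed

lemma summable_odd_geom:
  assumes "norm (x::complex) < 1"
  shows "summable (\<lambda>n. norm x ^ (2*n+k) * c)"
proof -
  have "summable (\<lambda>n. (norm x ^ k * c) * (norm x ^ 2)^n)"
    by (intro summable_mult summable_geometric) (use assms in \<open>auto simp: abs_square_less_1\<close>)
  moreover have "(\<lambda>n. norm x ^ (2*n+k) * c) = (\<lambda>n. (norm x ^ k * c) * (norm x ^ 2)^n)"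
    by (rule ext) (simp add: power_add power_mult[symmetric] mult_ac)
  ultimately show ?thesis by simp
qed

lemma PA_holo:
  assumes sp: "Im \<sigma> > 0"
  shows "PA \<sigma> holomorphic_on UNIV"
proof -
  have "(\<lambda>z. \<Prod>n. 1 + nx \<sigma> ^ (2*n+1) * nw z) holomorphic_on UNIV"
  proof (rule holo_prodinf(1))
    fix n show "(\<lambda>z. nx \<sigma> ^ (2*n+1) * nw z) holomorphic_on UNIV"
      unfolding nw_def by (intro holomorphic_intros)
  next
    fix R :: real
    have "norm (nx \<sigma> ^ (2*n+1) * nw z) \<le> norm (nx \<sigma>) ^ (2*n+1) * exp (2*pi*R)" if "norm z \<le> R" for n z
      using nw_bound(1)[OF that] by (simp add: norm_mult norm_power mult_left_mono)
    then show "\<exists>M. summable M \<and> (\<forall>n z. norm z \<le> R \<longrightarrow> norm (nx \<sigma> ^ (2*n+1) * nw z) \<le> M n)"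
      using summable_odd_geom[OF nx_lt1[OF sp], of 1 "exp (2*pi*R)"] by blast
  qed
  then show ?thesis unfolding PA_def[abs_def] .
qed

lemma PB_holo:
  assumes sp: "Im \<sigma> > 0"
  shows "PB \<sigma> holomorphic_on UNIV"
proof -
  have "(\<lambda>z. \<Prod>n. 1 + nx \<sigma> ^ (2*n+3) / nw z) holomorphic_on UNIV"
  proof (rule holo_prodinf(1))
    fix n show "(\<lambda>z. nx \<sigma> ^ (2*n+3) / nw z) holomorphic_on UNIV"
      unfolding nw_def by (intro holomorphic_intros) simp
  next
    fix R :: real
    have "norm (nx \<sigma> ^ (2*n+3) / nw z) \<le> norm (nx \<sigma>) ^ (2*n+3) * exp (2*pi*R)" if "norm z \<le> R" for n z
    proof -
      have "norm (nx \<sigma> ^ (2*n+3) / nw z) = norm (nx \<sigma>) ^ (2*n+3) * norm (1 / nw z)"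
        by (simp add: norm_divide norm_power divide_inverse norm_mult)
      also have "\<dots> \<le> norm (nx \<sigma>) ^ (2*n+3) * exp (2*pi*R)"
        by (rule mult_left_mono[OF nw_bound(2)[OF that]]) simp
      finally show ?thesis .
    qed
    then show "\<exists>M. summable M \<and> (\<forall>n z. norm z \<le> R \<longrightarrow> norm (nx \<sigma> ^ (2*n+3) / nw z) \<le> M n)"
      using summable_odd_geom[OF nx_lt1[OF sp], of 3 "exp (2*pi*R)"] by blast
  qed
  then show ?thesis unfolding PB_def[abs_def] .
qed

lemma P1_holo: "Im \<sigma> > 0 \<Longrightarrow> P1 \<sigma> holomorphic_on UNIV"
  unfolding P1_def[abs_def]
  by (intro holomorphic_on_mult holomorphic_on_const PA_holo PB_holo)

definition z0 :: "complex \<Rightarrow> complex" where "z0 \<sigma> = (1 + \<sigma>) / 2"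

lemma nw_z0: "nw (z0 \<sigma>) = - nx \<sigma>"
proof -
  have "2 * of_real pi * \<i> * ((1 + \<sigma>) / 2) = of_real pi * \<i> + of_real pi * \<i> * \<sigma>"
    by (simp add: field_simps)
  then show ?thesis by (simp add: nw_def nx_def z0_def exp_add)
qed

lemma Ef_z0: "Ef \<sigma> (z0 \<sigma>) = 0"
  using nx_nz[of \<sigma>] by (simp add: Ef_def nw_z0)

lemma PA_z0: "PA \<sigma> (z0 \<sigma>) = qfinf (nx \<sigma> ^ 2)"
proof -
  have "1 + nx \<sigma> ^ (2*n+1) * nw (z0 \<sigma>) = 1 - (nx \<sigma> ^ 2) ^ Suc n" for n
  proof -
    have e: "2 * Suc n = Suc (2*n+1)" by simp
    have "(nx \<sigma> ^ 2) ^ Suc n = nx \<sigma> ^ (2 * Suc n)" by (rule power_mult[symmetric])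
    also have "\<dots> = nx \<sigma> ^ (Suc (2*n+1))" by (simp only: e)
    also have "\<dots> = nx \<sigma> * nx \<sigma> ^ (2*n+1)" by (rule power_Suc)
    finally have "(nx \<sigma> ^ 2) ^ Suc n = nx \<sigma> ^ (2*n+1) * nx \<sigma>" by (simp only: mult.commute)
    then show ?thesis by (simp add: nw_z0)
  qed
  then show ?thesis unfolding PA_def qfinf_def by simp
qed

lemma PB_z0: "PB \<sigma> (z0 \<sigma>) = qfinf (nx \<sigma> ^ 2)"
proof -
  have "1 + nx \<sigma> ^ (2*n+3) / nw (z0 \<sigma>) = 1 - (nx \<sigma> ^ 2) ^ Suc n" for n
  proof -
    have e: "2*n+3 = Suc (2 * Suc n)" by simp
    have "nx \<sigma> ^ (2*n+3) = nx \<sigma> * (nx \<sigma> ^ 2) ^ Suc n"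
      unfolding e power_Suc power_mult ..
    then show ?thesis using nx_nz[of \<sigma>] by (simp add: nw_z0)
  qed
  then show ?thesis unfolding PB_def qfinf_def by simp
qed

lemma P1_z0: "Im \<sigma> > 0 \<Longrightarrow> P1 \<sigma> (z0 \<sigma>) \<noteq> 0"
proof -
  assume sp: "Im \<sigma> > 0"
  have "qfinf (nx \<sigma> ^ 2) \<noteq> 0"
    by (rule qfinf_nz) (use nx_lt1[OF sp] in \<open>simp add: norm_power abs_square_less_1\<close>)
  then show ?thesis by (simp add: P1_def PA_z0 PB_z0)
qed

lemma Ef_alt: "Ef \<sigma> z = 1 + nx \<sigma> * exp (- (2 * of_real pi * \<i> * z))"
  by (simp add: Ef_def nw_def exp_minus divide_inverse)

lemma Ef_deriv: "(Ef \<sigma> has_field_derivative (nx \<sigma> * exp (- (2 * of_real pi * \<i> * z)) * (- (2 * of_real pi * \<i>)))) (at z)"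
proof -
  have "((\<lambda>z. 1 + nx \<sigma> * exp (- (2 * of_real pi * \<i> * z))) has_field_derivative
          (nx \<sigma> * exp (- (2 * of_real pi * \<i> * z)) * (- (2 * of_real pi * \<i>)))) (at z)"
    by (rule derivative_eq_intros refl | simp)+
  moreover have "Ef \<sigma> = (\<lambda>z. 1 + nx \<sigma> * exp (- (2 * of_real pi * \<i> * z)))"
    by (rule ext) (rule Ef_alt)
  ultimately show ?thesis by simp
qed

lemma Ef_deriv_z0: "nx \<sigma> * exp (- (2 * of_real pi * \<i> * z0 \<sigma>)) * (- (2 * of_real pi * \<i>)) = 2 * of_real pi * \<i>"
proof -
  have "nx \<sigma> * exp (- (2 * of_real pi * \<i> * z0 \<sigma>)) = nx \<sigma> / nw (z0 \<sigma>)"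
    by (simp add: nw_def exp_minus divide_inverse)
  also have "\<dots> = -1" using nx_nz[of \<sigma>] by (simp add: nw_z0)
  finally show ?thesis by simp
qed

lemma Im_inv: "Im \<sigma> > 0 \<Longrightarrow> Im (- 1 / \<sigma>) > 0"
proof -
  assume sp: "Im \<sigma> > 0"
  have "0 < (Re \<sigma>)\<^sup>2 + (Im \<sigma>)\<^sup>2" using sp by (intro add_nonneg_pos) auto
  then show ?thesis using sp by (simp add: Im_divide)
qed

lemma thS_quasi_inv: "thS \<tau> (y - \<tau>) = exp (2 * of_real pi * \<i> * y - of_real pi * \<i> * \<tau>) * thS \<tau> y"
proof -
  define a where "a = - of_real pi * \<i> * \<tau> - 2 * of_real pi * \<i> * (y - \<tau>)"
  have q: "thS \<tau> y = exp a * thS \<tau> (y - \<tau>)"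
    using thS_quasi[of \<tau> "y - \<tau>"] by (simp add: a_def)
  have "2 * of_real pi * \<i> * y - of_real pi * \<i> * \<tau> = - a" by (simp add: a_def algebra_simps)
  then have "exp (2 * of_real pi * \<i> * y - of_real pi * \<i> * \<tau>) * thS \<tau> y = exp (- a) * exp a * thS \<tau> (y - \<tau>)"
    using q by simp
  also have "\<dots> = thS \<tau> (y - \<tau>)" by (simp add: exp_minus)
  finally show ?thesis by simp
qed

definition Fi :: "complex \<Rightarrow> complex \<Rightarrow> complex" where
  "Fi \<sigma> z = exp (- (of_real pi * \<i> * z^2 / \<sigma>)) * thS (- 1 / \<sigma>) (z / \<sigma>)"

lemma Fi_per:
  assumes s0: "\<sigma> \<noteq> 0"
  shows "Fi \<sigma> (z + 1) = Fi \<sigma> z"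
proof -
  have e1: "(z + 1) / \<sigma> = z / \<sigma> - (- 1 / \<sigma>)" by (simp add: add_divide_distrib add.commute)
  have e2: "- (of_real pi * \<i> * (z + 1)^2 / \<sigma>) + (2 * of_real pi * \<i> * (z / \<sigma>) - of_real pi * \<i> * (- 1 / \<sigma>))
      = - (of_real pi * \<i> * z^2 / \<sigma>)"
    using s0 by (simp add: field_simps power2_eq_square)
  have "Fi \<sigma> (z + 1) = exp (- (of_real pi * \<i> * (z + 1)^2 / \<sigma>)) *
      (exp (2 * of_real pi * \<i> * (z / \<sigma>) - of_real pi * \<i> * (- 1 / \<sigma>)) * thS (- 1 / \<sigma>) (z / \<sigma>))"
    unfolding Fi_def e1 thS_quasi_inv ..
  also have "\<dots> = exp (- (of_real pi * \<i> * (z + 1)^2 / \<sigma>) + (2 * of_real pi * \<i> * (z / \<sigma>) - of_real pi * \<i> * (- 1 / \<sigma>)))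
      * thS (- 1 / \<sigma>) (z / \<sigma>)"
    by (simp only: exp_add mult.assoc)
  also have "\<dots> = Fi \<sigma> z" unfolding e2 Fi_def ..
  finally show ?thesis .
qed

lemma Fi_quasi:
  assumes s0: "\<sigma> \<noteq> 0"
  shows "Fi \<sigma> (z + \<sigma>) = exp (- of_real pi * \<i> * \<sigma> - 2 * of_real pi * \<i> * z) * Fi \<sigma> z"
proof -
  have e1: "(z + \<sigma>) / \<sigma> = z / \<sigma> + 1" using s0 by (simp add: field_simps)
  have e2: "- (of_real pi * \<i> * (z + \<sigma>)^2 / \<sigma>) =
      (- of_real pi * \<i> * \<sigma> - 2 * of_real pi * \<i> * z) + - (of_real pi * \<i> * z^2 / \<sigma>)"
    using s0 by (simp add: field_simps power2_eq_square)
  show ?thesis unfolding Fi_def e1 thS_periodic e2 exp_add by (simp add: mult_ac)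
qed

lemma Fi_even: "Fi \<sigma> (- z) = Fi \<sigma> z"
proof -
  have "(- z) / \<sigma> = - (z / \<sigma>)" by simp
  then show ?thesis unfolding Fi_def by (simp add: thS_even)
qed

lemma Fi_holo:
  assumes sp: "Im \<sigma> > 0"
  shows "Fi \<sigma> holomorphic_on UNIV"
proof -
  have h: "(\<lambda>z. thS (- 1 / \<sigma>) z) holomorphic_on UNIV" by (rule thS_holo[OF Im_inv[OF sp]])
  have s0: "\<sigma> \<noteq> 0" using sp by auto
  have hz: "(\<lambda>z. z / \<sigma>) holomorphic_on UNIV" using s0 by (intro holomorphic_intros)
  have h2: "(\<lambda>z. thS (- 1 / \<sigma>) z) holomorphic_on ((\<lambda>z. z / \<sigma>) ` UNIV)"
    by (rule holomorphic_on_subset[OF h]) simp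
  have "(\<lambda>z. thS (- 1 / \<sigma>) (z / \<sigma>)) holomorphic_on UNIV"
    using holomorphic_on_compose[OF hz h2] by (simp add: o_def)
  then show ?thesis unfolding Fi_def[abs_def] using s0 by (intro holomorphic_intros)
qed

lemma Fi_z0:
  assumes s0: "\<sigma> \<noteq> 0"
  shows "Fi \<sigma> (z0 \<sigma>) = 0"
proof -
  define w where "w = - z0 \<sigma> + 1"
  have zz: "z0 \<sigma> = w + \<sigma>" by (simp add: w_def z0_def field_simps)
  have ex: "- of_real pi * \<i> * \<sigma> - 2 * of_real pi * \<i> * w = - (of_real pi * \<i>)"
    by (simp add: w_def z0_def field_simps)
  have "Fi \<sigma> (z0 \<sigma>) = exp (- of_real pi * \<i> * \<sigma> - 2 * of_real pi * \<i> * w) * Fi \<sigma> w"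
    unfolding zz by (rule Fi_quasi[OF s0])
  also have "Fi \<sigma> w = Fi \<sigma> (- z0 \<sigma>)" unfolding w_def by (rule Fi_per[OF s0])
  also have "\<dots> = Fi \<sigma> (z0 \<sigma>)" by (rule Fi_even)
  finally have "Fi \<sigma> (z0 \<sigma>) = - Fi \<sigma> (z0 \<sigma>)" unfolding ex by (simp add: exp_minus)
  then show ?thesis by simp
qed

definition Qf :: "complex \<Rightarrow> complex \<Rightarrow> complex" where
  "Qf \<sigma> z = Fi \<sigma> z / thS \<sigma> z"

context
  fixes \<sigma> :: complex
  assumes sp: "Im \<sigma> > 0"
begin

lemma s0: "\<sigma> \<noteq> 0" using sp by auto

lemma Qf_per: "Qf \<sigma> (z + 1) = Qf \<sigma> z"
  by (simp add: Qf_def Fi_per[OF s0] thS_periodic)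

lemma Qf_quasi: "Qf \<sigma> (z + \<sigma>) = Qf \<sigma> z"
  unfolding Qf_def Fi_quasi[OF s0] thS_quasi by (simp add: mult_divide_mult_cancel_left)

lemma Qf_lat: "Qf \<sigma> (z + of_int m + of_int n * \<sigma>) = Qf \<sigma> z"
proof -
  have "Qf \<sigma> ((z + of_int m) + of_int n * \<sigma>) = Qf \<sigma> (z + of_int m)"
    by (rule per_int[of "Qf \<sigma>"]) (rule Qf_quasi)
  also have "\<dots> = Qf \<sigma> (z + of_int m * 1)"  by simp
  also have "\<dots> = Qf \<sigma> z" by (rule per_int[of "Qf \<sigma>"]) (simp add: Qf_per)
  finally show ?thesis .
qed

lemma th_lat_zero: "thS \<sigma> (w + of_int m + of_int n * \<sigma>) = 0 \<longleftrightarrow> thS \<sigma> w = 0"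
proof -
  have "thS \<sigma> ((w + of_int m) + of_int n * \<sigma>) = 0 \<longleftrightarrow> thS \<sigma> (w + of_int m) = 0"
    by (rule zero_inv[of "thS \<sigma>" \<sigma>]) (rule thS_quasi, simp)
  also have "thS \<sigma> (w + of_int m) = thS \<sigma> w" by (rule thS_periodic_int)
  finally show ?thesis .
qed

lemma Fi_lat_zero: "Fi \<sigma> (w + of_int m + of_int n * \<sigma>) = 0 \<longleftrightarrow> Fi \<sigma> w = 0"
proof -
  have "Fi \<sigma> ((w + of_int m) + of_int n * \<sigma>) = 0 \<longleftrightarrow> Fi \<sigma> (w + of_int m) = 0"
    by (rule zero_inv[of "Fi \<sigma>" \<sigma>]) (rule Fi_quasi[OF s0], simp)
  also have "Fi \<sigma> (w + of_int m) = Fi \<sigma> (w + of_int m * 1)" by simp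
  also have "\<dots> = Fi \<sigma> w" by (rule per_int[of "Fi \<sigma>"]) (rule Fi_per[OF s0])
  finally show ?thesis .
qed

lemma th_z0: "thS \<sigma> (z0 \<sigma>) = 0"
  by (simp add: th_factor[OF sp] Ef_z0)

lemma th_zero_iff: "thS \<sigma> z = 0 \<longleftrightarrow> (\<exists>m n::int. z = z0 \<sigma> + of_int m + of_int n * \<sigma>)"
proof
  assume "thS \<sigma> z = 0"
  from thS_zero[OF sp this] show "\<exists>m n::int. z = z0 \<sigma> + of_int m + of_int n * \<sigma>"
    unfolding z0_def .
next
  assume "\<exists>m n::int. z = z0 \<sigma> + of_int m + of_int n * \<sigma>"
  then obtain m n :: int where z: "z = z0 \<sigma> + of_int m + of_int n * \<sigma>" by blast
  show "thS \<sigma> z = 0" unfolding z th_lat_zero by (rule th_z0)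
qed

lemma Fi_zero_lat: "thS \<sigma> z = 0 \<Longrightarrow> Fi \<sigma> z = 0"
proof -
  assume "thS \<sigma> z = 0"
  then obtain m n :: int where z: "z = z0 \<sigma> + of_int m + of_int n * \<sigma>"
    unfolding th_zero_iff by blast
  show ?thesis unfolding z Fi_lat_zero by (rule Fi_z0[OF s0])
qed

definition L0 :: complex where
  "L0 = deriv (Fi \<sigma>) (z0 \<sigma>) / (2 * of_real pi * \<i>) / P1 \<sigma> (z0 \<sigma>)"

lemma Qf_lim_z0: "(Qf \<sigma> \<longlongrightarrow> L0) (at (z0 \<sigma>))"
proof -
  have e: "Qf \<sigma> = (\<lambda>z. Fi \<sigma> z / Ef \<sigma> z / P1 \<sigma> z)"
    by (rule ext) (simp add: Qf_def th_factor[OF sp] divide_divide_eq_left)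
  have d1: "(Fi \<sigma> has_field_derivative deriv (Fi \<sigma>) (z0 \<sigma>)) (at (z0 \<sigma>))"
    by (rule holomorphic_derivI[OF Fi_holo[OF sp]]) auto
  have l1: "((\<lambda>z. Fi \<sigma> z / Ef \<sigma> z) \<longlongrightarrow> deriv (Fi \<sigma>) (z0 \<sigma>) / (2 * of_real pi * \<i>)) (at (z0 \<sigma>))"
    by (rule lhopital_complex_simple[OF d1 Ef_deriv Fi_z0[OF s0] Ef_z0])
       (simp_all only: Ef_deriv_z0 two_pi_i_nz not_False_eq_True)
  have c: "isCont (P1 \<sigma>) (z0 \<sigma>)"
    using holomorphic_on_imp_continuous_on[OF P1_holo[OF sp]] continuous_on_eq_continuous_at by blast
  show ?thesis unfolding e L0_def
    by (rule tendsto_divide[OF l1 isContD[OF c] P1_z0[OF sp]])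
qed

definition Qt :: "complex \<Rightarrow> complex" where
  "Qt z = (if thS \<sigma> z = 0 then L0 else Qf \<sigma> z)"

lemma th_cont: "isCont (thS \<sigma>) z"
proof -
  have "continuous_on UNIV (thS \<sigma>)"
    using holomorphic_on_imp_continuous_on[OF thS_holo[OF sp]] by simp
  then show ?thesis using continuous_on_eq_continuous_at by blast
qed

lemma Qt_holo: "Qt holomorphic_on UNIV"
proof -
  have "Qt analytic_on UNIV"
    unfolding analytic_on_def
  proof
    fix p :: complex
    show "\<exists>e>0. Qt holomorphic_on ball p e"
    proof (cases "thS \<sigma> p = 0")
      case False
      obtain e where e: "e > 0" "\<And>y. dist p y < e \<Longrightarrow> thS \<sigma> y \<noteq> 0"
        using continuous_at_avoid[OF th_cont False] by blast
      have "(\<lambda>z. Fi \<sigma> z / thS \<sigma> z) holomorphic_on ball p e"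
        by (intro holomorphic_on_divide holomorphic_on_subset[OF Fi_holo[OF sp]]
              holomorphic_on_subset[OF thS_holo[OF sp]]) (use e in auto)
      then have "Qt holomorphic_on ball p e"
        by (rule holomorphic_transform) (use e in \<open>auto simp: Qt_def Qf_def\<close>)
      then show ?thesis using e by blast
    next
      case True
      then obtain m n :: int where p: "p = z0 \<sigma> + of_int m + of_int n * \<sigma>"
        using th_zero_iff by blast
      define d where "d = min 1 (Im \<sigma>)"
      have d0: "d > 0" using sp by (simp add: d_def)
      have nz: "thS \<sigma> y \<noteq> 0" if "y \<in> ball p d" "y \<noteq> p" for y
      proof
        assume "thS \<sigma> y = 0"
        then obtain m' n' :: int where y: "y = z0 \<sigma> + of_int m' + of_int n' * \<sigma>"
          using th_zero_iff by blast
        have yp: "y - p = of_int (m' - m) + of_int (n' - n) * \<sigma>"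
          unfolding y p by (simp add: algebra_simps)
        have "m' - m \<noteq> 0 \<or> n' - n \<noteq> 0" using that(2) unfolding y p by auto
        then have "norm (y - p) \<ge> d" unfolding yp d_def by (rule lattice_sep[OF sp])
        moreover have "norm (y - p) < d" using that(1) by (simp add: dist_norm norm_minus_commute)
        ultimately show False by simp
      qed
      have hol: "Qf \<sigma> holomorphic_on ball p d - {p}"
        unfolding Qf_def[abs_def]
        by (intro holomorphic_on_divide holomorphic_on_subset[OF Fi_holo[OF sp]]
              holomorphic_on_subset[OF thS_holo[OF sp]]) (use nz in auto)
      have lim: "(Qf \<sigma> \<longlongrightarrow> L0) (at p)"
      proof -
        define c where "c = of_int m + of_int n * \<sigma>"
        have "((\<lambda>y. Qf \<sigma> (y + (- c))) \<longlongrightarrow> L0) (at (z0 \<sigma> - (- c)))"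
          by (rule LIM_offset[OF Qf_lim_z0])
        moreover have "(\<lambda>y. Qf \<sigma> (y + (- c))) = Qf \<sigma>"
        proof
          fix y
          have "Qf \<sigma> ((y - c) + of_int m + of_int n * \<sigma>) = Qf \<sigma> (y - c)" by (rule Qf_lat)
          then show "Qf \<sigma> (y + (- c)) = Qf \<sigma> y" by (simp add: c_def algebra_simps)
        qed
        moreover have "z0 \<sigma> - (- c) = p" by (simp add: p c_def algebra_simps)
        ultimately show ?thesis by simp
      qed
      have "(\<lambda>y. if y = p then L0 else Qf \<sigma> y) holomorphic_on ball p d"
        by (rule removable_singularity[OF hol _ lim]) simp
      then have "Qt holomorphic_on ball p d"
        by (rule holomorphic_transform) (use nz True in \<open>auto simp: Qt_def\<close>)
      then show ?thesis using d0 by blast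
    qed
  qed
  then show ?thesis by (rule analytic_imp_holomorphic)
qed

lemma Qt_lat: "Qt (z + of_int m + of_int n * \<sigma>) = Qt z"
  unfolding Qt_def using th_lat_zero[of z m n] Qf_lat[of z m n] by simp

lemma Qt_bounded: "bounded (range Qt)"
proof -
  define g where "g = (\<lambda>ab::real \<times> real. complex_of_real (fst ab) + complex_of_real (snd ab) * \<sigma>)"
  define K where "K = g ` ({0..1} \<times> {0..1})"
  have cg: "continuous_on UNIV g" unfolding g_def by (intro continuous_intros)
  have "compact K" unfolding K_def
    by (rule compact_continuous_image[OF continuous_on_subset[OF cg]]) (auto intro: compact_Times)
  moreover have "continuous_on K Qt"
    using holomorphic_on_imp_continuous_on[OF Qt_holo] continuous_on_subset by blast
  ultimately have "compact (Qt ` K)" by (rule compact_continuous_image[rotated])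
  then have bK: "bounded (Qt ` K)" by (rule compact_imp_bounded)
  have "range Qt \<subseteq> Qt ` K"
  proof
    fix v assume "v \<in> range Qt"
    then obtain z where v: "v = Qt z" by blast
    define b where "b = Im z / Im \<sigma>"
    define a where "a = Re z - b * Re \<sigma>"
    have zab: "z = complex_of_real a + complex_of_real b * \<sigma>"
      using sp by (simp add: complex_eq_iff a_def b_def)
    define a' where "a' = a - of_int (floor a)"
    define b' where "b' = b - of_int (floor b)"
    have ab': "a' \<in> {0..1}" "b' \<in> {0..1}"
      using frac_ge_0[of a] frac_lt_1[of a] frac_ge_0[of b] frac_lt_1[of b]
      unfolding a'_def b'_def by (auto simp: frac_def)
    have "z = g (a', b') + of_int (floor a) + of_int (floor b) * \<sigma>"
      unfolding zab g_def a'_def b'_def by (simp add: algebra_simps)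
    then have "Qt z = Qt (g (a', b'))" using Qt_lat by simp
    then show "v \<in> Qt ` K" using ab' v unfolding K_def by blast
  qed
  then show ?thesis using bK bounded_subset by blast
qed

lemma theta_inv_ctx: "\<exists>C. \<forall>z. Fi \<sigma> z = C * thS \<sigma> z"
proof -
  have "Qt constant_on UNIV" by (rule Liouville_theorem[OF Qt_holo Qt_bounded])
  then obtain C where C: "\<And>z. Qt z = C" unfolding constant_on_def by blast
  have "Fi \<sigma> z = C * thS \<sigma> z" for z
  proof (cases "thS \<sigma> z = 0")
    case True
    then show ?thesis using Fi_zero_lat by simp
  next
    case False
    then have "Fi \<sigma> z / thS \<sigma> z = C" using C[of z] by (simp add: Qt_def Qf_def)
    then show ?thesis using False by (simp add: field_simps)
  qed
  then show ?thesis by blast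
qed

end

theorem theta_inversion:
  assumes "Im \<sigma> > 0"
  shows "\<exists>C. \<forall>z. exp (- (of_real pi * \<i> * z^2 / \<sigma>)) * thS (- 1 / \<sigma>) (z / \<sigma>) = C * thS \<sigma> z"
  using theta_inv_ctx[OF assms] unfolding Fi_def .




definition ft :: "complex \<Rightarrow> complex \<Rightarrow> int \<Rightarrow> complex" where
  "ft c \<tau> n = exp (of_real pi * \<i> * of_int n + 7 * of_real pi * \<i> * \<tau> * (of_int n - c)^2)"

definition fS :: "complex \<Rightarrow> complex \<Rightarrow> complex" where
  "fS c \<tau> = infsum (ft c \<tau>) UNIV"

lemma ft_tm: "ft c \<tau> n = exp (7 * of_real pi * \<i> * \<tau> * c^2) * tm (7 * \<tau>) (1/2 - 7 * c * \<tau>) n"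
proof -
  have "of_real pi * \<i> * of_int n + 7 * of_real pi * \<i> * \<tau> * (of_int n - c)^2
      = 7 * of_real pi * \<i> * \<tau> * c^2 + (of_real pi * \<i> * (of_int n)^2 * (7 * \<tau>) + 2 * of_real pi * \<i> * of_int n * (1/2 - 7 * c * \<tau>))"
    by (simp add: algebra_simps power2_eq_square)
  then show ?thesis unfolding ft_def tm_def by (simp only: exp_add)
qed

lemma fS_th: "fS c \<tau> = exp (7 * of_real pi * \<i> * \<tau> * c^2) * thS (7 * \<tau>) (1/2 - 7 * c * \<tau>)"
proof -
  have "ft c \<tau> = (\<lambda>n. exp (7 * of_real pi * \<i> * \<tau> * c^2) * tm (7 * \<tau>) (1/2 - 7 * c * \<tau>) n)"
    by (rule ext) (rule ft_tm)
  then show ?thesis unfolding fS_def thS_def by (simp add: infsum_cmult_right')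
qed

lemma qpow_add: "qpow \<tau> (a + b) = qpow \<tau> a * qpow \<tau> b"
  unfolding qpow_def by (simp add: exp_add[symmetric] algebra_simps)

lemma norm_qpow: "norm (qpow \<tau> a) = exp (- 2 * pi * a * Im \<tau>)"
  unfolding qpow_def by (simp add: norm_exp_eq_Re)

lemma qpow_nz: "qpow \<tau> a \<noteq> 0" by (simp add: qpow_def)

definition Pr :: "complex \<Rightarrow> real \<Rightarrow> complex" where
  "Pr \<tau> \<alpha> = (\<Prod>n. 1 - qpow \<tau> (7 * real n + \<alpha>))"

lemma Pr_conv:
  assumes "Im \<tau> > 0"
  shows "convergent_prod (\<lambda>n. 1 - qpow \<tau> (7 * real n + \<alpha>))"
proof -
  define r where "r = exp (- 14 * pi * Im \<tau>)"
  have r: "0 \<le> r" "r < 1" using assms by (auto simp: r_def)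
  have "summable (\<lambda>n. exp (- 2 * pi * \<alpha> * Im \<tau>) * r ^ n)"
    by (intro summable_mult summable_geometric) (use r in auto)
  moreover have "norm (- qpow \<tau> (7 * real n + \<alpha>)) = exp (- 2 * pi * \<alpha> * Im \<tau>) * r ^ n" for n
  proof -
    have "exp (- 2 * pi * (7 * real n + \<alpha>) * Im \<tau>) = exp (- 2 * pi * \<alpha> * Im \<tau> + real n * (- 14 * pi * Im \<tau>))"
      by (simp add: algebra_simps)
    also have "\<dots> = exp (- 2 * pi * \<alpha> * Im \<tau>) * r ^ n"
      by (simp only: exp_add r_def exp_of_nat_mult)
    finally show ?thesis by (simp add: norm_qpow)
  qed
  ultimately have "summable (\<lambda>n. norm (- qpow \<tau> (7 * real n + \<alpha>)))" by simp
  from cprod_summable[OF this] show ?thesis by simp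
qed

lemma Pr_nz:
  assumes "Im \<tau> > 0" "\<alpha> > 0"
  shows "Pr \<tau> \<alpha> \<noteq> 0"
  unfolding Pr_def
proof (rule prodinf_nonzero[OF Pr_conv[OF assms(1)]])
  fix n
  have "norm (qpow \<tau> (7 * real n + \<alpha>)) < 1"
    unfolding norm_qpow using assms by (simp add: mult_pos_pos)
  then show "1 - qpow \<tau> (7 * real n + \<alpha>) \<noteq> 0" by auto
qed

lemma neg_qpow: "- qpow \<tau> a = exp (of_real pi * \<i> + 2 * of_real pi * \<i> * of_real a * \<tau>)"
  unfolding qpow_def by (simp add: exp_add)

lemma fS_prod:
  assumes sp: "Im \<tau> > 0"
  shows "fS (of_real \<beta>) \<tau> = qpow \<tau> (7 * \<beta>^2 / 2) * Pr \<tau> 7 * Pr \<tau> (7/2 - 7*\<beta>) * Pr \<tau> (7/2 + 7*\<beta>)"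
proof -
  have s7: "Im (7 * \<tau>) > 0" using sp by simp
  define z where "z = 1/2 - 7 * of_real \<beta> * \<tau>"
  define x where "x = nx (7 * \<tau>)"
  have e1: "1 + x ^ (2*n+1) * nw z = 1 - qpow \<tau> (7 * real n + (7/2 - 7*\<beta>))" for n
  proof -
    have "x ^ (2*n+1) * nw z = exp (of_nat (2*n+1) * (of_real pi * \<i> * (7 * \<tau>)) + 2 * of_real pi * \<i> * z)"
      unfolding x_def by (rule nxk_nw)
    also have "\<dots> = - qpow \<tau> (7 * real n + (7/2 - 7*\<beta>))"
      unfolding neg_qpow z_def by (rule arg_cong[where f=exp]) (simp add: algebra_simps)
    finally show ?thesis by simp
  qed
  have e2: "1 + x ^ (2*n+1) / nw z = 1 - qpow \<tau> (7 * real n + (7/2 + 7*\<beta>))" for n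
  proof -
    have "x ^ (2*n+1) / nw z = exp (of_nat (2*n+1) * (of_real pi * \<i> * (7 * \<tau>)) - 2 * of_real pi * \<i> * z)"
      unfolding x_def by (rule nxk_div_nw)
    also have "\<dots> = exp (- (of_real pi * \<i>)) * exp (2 * of_real pi * \<i> * of_real (7 * real n + (7/2 + 7*\<beta>)) * \<tau>)"
      unfolding exp_add[symmetric] z_def by (rule arg_cong[where f=exp]) (simp add: algebra_simps)
    also have "\<dots> = - qpow \<tau> (7 * real n + (7/2 + 7*\<beta>))"
      unfolding qpow_def by (simp add: exp_minus)
    finally show ?thesis by simp
  qed
  have e3: "1 - (x^2) ^ Suc n = 1 - qpow \<tau> (7 * real n + 7)" for n
  proof -
    have "(x^2) ^ Suc n = x ^ (2 * Suc n)" by (rule power_mult[symmetric])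
    also have "\<dots> = exp (of_nat (2 * Suc n) * (of_real pi * \<i> * (7 * \<tau>)))"
      unfolding x_def nx_def by (rule exp_of_nat_mult[symmetric])
    also have "\<dots> = qpow \<tau> (7 * real n + 7)"
      unfolding qpow_def by (rule arg_cong[where f=exp]) (simp add: algebra_simps)
    finally show ?thesis by simp
  qed
  have jp: "jprod x (nw z) = Pr \<tau> (7/2 - 7*\<beta>) * Pr \<tau> (7/2 + 7*\<beta>)"
  proof -
    have "jprod x (nw z) = (\<Prod>n. (1 - qpow \<tau> (7 * real n + (7/2 - 7*\<beta>))) * (1 - qpow \<tau> (7 * real n + (7/2 + 7*\<beta>))))"
      unfolding jprod_def e1 e2 ..
    also have "\<dots> = Pr \<tau> (7/2 - 7*\<beta>) * Pr \<tau> (7/2 + 7*\<beta>)"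
      unfolding Pr_def by (rule prodinf_mult[symmetric, OF Pr_conv[OF sp] Pr_conv[OF sp]])
    finally show ?thesis .
  qed
  have qf: "qfinf (x^2) = Pr \<tau> 7" unfolding qfinf_def Pr_def e3 ..
  have pre: "exp (7 * of_real pi * \<i> * \<tau> * (of_real \<beta>)^2) = qpow \<tau> (7 * \<beta>^2 / 2)"
    unfolding qpow_def by (rule arg_cong[where f=exp]) (simp add: algebra_simps)
  show ?thesis
    unfolding fS_th thS_jtp[OF s7] pre z_def[symmetric] x_def[symmetric] jp qf
    by (simp add: mult_ac)
qed

lemma fS1: "Im \<tau> > 0 \<Longrightarrow> fS (of_real (1/14)) \<tau> = qpow \<tau> (1/56) * Pr \<tau> 7 * Pr \<tau> 3 * Pr \<tau> 4"
  using fS_prod[of \<tau> "1/14"] by (simp add: power2_eq_square)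
lemma fS3: "Im \<tau> > 0 \<Longrightarrow> fS (of_real (3/14)) \<tau> = qpow \<tau> (9/56) * Pr \<tau> 7 * Pr \<tau> 2 * Pr \<tau> 5"
  using fS_prod[of \<tau> "3/14"] by (simp add: power2_eq_square)
lemma fS5: "Im \<tau> > 0 \<Longrightarrow> fS (of_real (5/14)) \<tau> = qpow \<tau> (25/56) * Pr \<tau> 7 * Pr \<tau> 1 * Pr \<tau> 6"
  using fS_prod[of \<tau> "5/14"] by (simp add: power2_eq_square)

lemma fS5_nz: assumes "Im \<tau> > 0" shows "fS (of_real (5/14)) \<tau> \<noteq> 0"
  unfolding fS5[OF assms] using assms by (simp add: qpow_nz Pr_nz)

lemma ratio_prod:
  assumes sp: "Im \<tau> > 0"
  shows "(\<Prod>n. ((1 - qpow \<tau> (7 * real n + a)) * (1 - qpow \<tau> (7 * real n + b))) /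
                ((1 - qpow \<tau> (7 * real n + c)) * (1 - qpow \<tau> (7 * real n + d))))
       = Pr \<tau> a * Pr \<tau> b / (Pr \<tau> c * Pr \<tau> d)"
proof -
  have n: "convergent_prod (\<lambda>n. (1 - qpow \<tau> (7 * real n + a)) * (1 - qpow \<tau> (7 * real n + b)))"
    by (rule convergent_prod_mult[OF Pr_conv[OF sp] Pr_conv[OF sp]])
  have d: "convergent_prod (\<lambda>n. (1 - qpow \<tau> (7 * real n + c)) * (1 - qpow \<tau> (7 * real n + d)))"
    by (rule convergent_prod_mult[OF Pr_conv[OF sp] Pr_conv[OF sp]])
  show ?thesis
    unfolding prodinf_divide[OF n d, symmetric] Pr_def
    by (simp only: prodinf_mult[OF Pr_conv[OF sp] Pr_conv[OF sp]])
qed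

lemma s_eq:
  assumes sp: "Im \<tau> > 0"
  shows "s_fun \<tau> = fS (of_real (1/14)) \<tau> / fS (of_real (5/14)) \<tau>"
proof -
  have e: "\<And>n. real (7 * Suc n - 3) = 7 * real n + 4" "\<And>n. real (7 * Suc n - 4) = 7 * real n + 3"
          "\<And>n. real (7 * Suc n - 1) = 7 * real n + 6" "\<And>n. real (7 * Suc n - 6) = 7 * real n + 1"
    by simp_all
  have "s_fun \<tau> = qpow \<tau> (-3/7) * (Pr \<tau> 4 * Pr \<tau> 3 / (Pr \<tau> 6 * Pr \<tau> 1))"
    unfolding s_fun_def e ratio_prod[OF sp] ..
  also have "\<dots> = fS (of_real (1/14)) \<tau> / fS (of_real (5/14)) \<tau>"
  proof -
    have q: "qpow \<tau> (1/56) = qpow \<tau> (-3/7) * qpow \<tau> (25/56)"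
      by (simp add: qpow_add[symmetric])
    have nz: "qpow \<tau> (25/56) \<noteq> 0" "Pr \<tau> 7 \<noteq> 0" "Pr \<tau> 6 \<noteq> 0" "Pr \<tau> 1 \<noteq> 0"
      using sp by (simp_all add: qpow_nz Pr_nz)
    show ?thesis unfolding fS1[OF sp] fS5[OF sp] q using nz by (simp add: field_simps)
  qed
  finally show ?thesis .
qed

lemma t_eq:
  assumes sp: "Im \<tau> > 0"
  shows "t_fun \<tau> = fS (of_real (3/14)) \<tau> / fS (of_real (5/14)) \<tau>"
proof -
  have e: "\<And>n. real (7 * Suc n - 2) = 7 * real n + 5" "\<And>n. real (7 * Suc n - 5) = 7 * real n + 2"
          "\<And>n. real (7 * Suc n - 1) = 7 * real n + 6" "\<And>n. real (7 * Suc n - 6) = 7 * real n + 1"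
    by simp_all
  have "t_fun \<tau> = qpow \<tau> (-2/7) * (Pr \<tau> 5 * Pr \<tau> 2 / (Pr \<tau> 6 * Pr \<tau> 1))"
    unfolding t_fun_def e ratio_prod[OF sp] ..
  also have "\<dots> = fS (of_real (3/14)) \<tau> / fS (of_real (5/14)) \<tau>"
  proof -
    have q: "qpow \<tau> (9/56) = qpow \<tau> (-2/7) * qpow \<tau> (25/56)"
      by (simp add: qpow_add[symmetric])
    have nz: "qpow \<tau> (25/56) \<noteq> 0" "Pr \<tau> 7 \<noteq> 0" "Pr \<tau> 6 \<noteq> 0" "Pr \<tau> 1 \<noteq> 0"
      using sp by (simp_all add: qpow_nz Pr_nz)
    show ?thesis unfolding fS3[OF sp] fS5[OF sp] q using nz by (simp add: field_simps)
  qed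
  finally show ?thesis .
qed

definition gterm :: "complex \<Rightarrow> complex \<Rightarrow> int \<Rightarrow> complex" where
  "gterm c \<tau> m = exp (of_real pi * \<i> * \<tau> * (2 * of_int m + 1)^2 / 28 + of_real pi * \<i> * c * (2 * of_int m + 1))"

lemma fS_inv:
  assumes sp: "Im \<tau> > 0"
  shows "\<exists>C. \<forall>c. fS c (- 1 / \<tau>) = C * infsum (gterm c \<tau>) UNIV
              \<and> gterm c \<tau> summable_on UNIV"
proof -
  have t0: "\<tau> \<noteq> 0" using sp by auto
  define \<sigma> where "\<sigma> = \<tau> / 7"
  have ss: "Im \<sigma> > 0" using sp by (simp add: \<sigma>_def)
  obtain C where C: "\<And>z. exp (- (of_real pi * \<i> * z^2 / \<sigma>)) * thS (- 1 / \<sigma>) (z / \<sigma>) = C * thS \<sigma> z"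
    using theta_inversion[OF ss] by blast
  have "fS c (- 1 / \<tau>) = C * infsum (gterm c \<tau>) UNIV \<and> gterm c \<tau> summable_on UNIV" for c
  proof -
    define z where "z = \<tau> / 14 + c"
    define A where "A = - (7 * of_real pi * \<i> * c^2 / \<tau>) + of_real pi * \<i> * z^2 / \<sigma>"
    have e1: "7 * (- 1 / \<tau>) = - 1 / \<sigma>" by (simp add: \<sigma>_def)
    have e2: "1/2 - 7 * c * (- 1 / \<tau>) = z / \<sigma>" using t0 by (simp add: \<sigma>_def z_def field_simps)
    have th: "thS (- 1 / \<sigma>) (z / \<sigma>) = exp (of_real pi * \<i> * z^2 / \<sigma>) * (C * thS \<sigma> z)"
      using C[of z] by (simp add: exp_minus field_simps)
    have "fS c (- 1 / \<tau>) = exp (7 * of_real pi * \<i> * (- 1 / \<tau>) * c^2) * thS (- 1 / \<sigma>) (z / \<sigma>)"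
      unfolding fS_th e1 e2 ..
    also have "\<dots> = C * (exp A * thS \<sigma> z)"
    proof -
      have ea: "exp A = exp (- (7 * of_real pi * \<i> * c^2 / \<tau>)) * exp (of_real pi * \<i> * z^2 / \<sigma>)"
        unfolding A_def by (rule exp_add)
      have ex: "7 * of_real pi * \<i> * (- 1 / \<tau>) * c^2 = - (7 * of_real pi * \<i> * c^2 / \<tau>)" by simp
      show ?thesis unfolding th ea ex by (simp only: mult_ac)
    qed
    finally have f1: "fS c (- 1 / \<tau>) = C * (exp A * thS \<sigma> z)" .
    have gt: "gterm c \<tau> = (\<lambda>m. exp A * tm \<sigma> z m)"
    proof
      fix m
      have "A + (of_real pi * \<i> * (of_int m)^2 * \<sigma> + 2 * of_real pi * \<i> * of_int m * z)
          = of_real pi * \<i> * \<tau> * (2 * of_int m + 1)^2 / 28 + of_real pi * \<i> * c * (2 * of_int m + 1)"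
        unfolding A_def \<sigma>_def z_def using t0 by (simp add: field_simps power2_eq_square)
      then show "gterm c \<tau> m = exp A * tm \<sigma> z m"
        unfolding gterm_def tm_def by (simp add: exp_add[symmetric])
    qed
    have "infsum (gterm c \<tau>) UNIV = exp A * thS \<sigma> z"
      unfolding gt thS_def by (rule infsum_cmult_right')
    moreover have "gterm c \<tau> summable_on UNIV"
      unfolding gt by (rule summable_on_cmult_right[OF thS_summable_on[OF ss]])
    ultimately show ?thesis using f1 by simp
  qed
  then show ?thesis by blast
qed

lemma dissect7:
  fixes g :: "int \<Rightarrow> complex"
  assumes sg: "g summable_on UNIV"
  shows "infsum g UNIV = (\<Sum>r<7. infsum (\<lambda>k. g (7 * k + int r)) UNIV)"
proof -
  define B where "B r = range (\<lambda>k::int. 7 * k + int r)" for r :: nat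
  have U: "(\<Union>r\<in>{..<7}. B r) = UNIV"
  proof -
    have "n \<in> (\<Union>r\<in>{..<7}. B r)" for n :: int
    proof -
      have "n = 7 * (n div 7) + int (nat (n mod 7))" by simp
      moreover have "nat (n mod 7) < 7" by simp
      ultimately show ?thesis unfolding B_def by blast
    qed
    then show ?thesis by blast
  qed
  have D: "B r \<inter> B r' = {}" if "r < 7" "r' < 7" "r \<noteq> r'" for r r'
  proof -
    have "7 * k + int r \<noteq> 7 * k' + int r'" for k k' :: int
    proof
      assume "7 * k + int r = 7 * k' + int r'"
      then have "(7 * k + int r) mod 7 = (7 * k' + int r') mod 7" by simp
      then have "int r = int r'" using that by simp
      then show False using that by simp
    qed
    then show ?thesis unfolding B_def by blast
  qed
  have "(\<Sum>r\<in>{..<7}. infsum g (B r)) = infsum g (\<Union>r\<in>{..<7}. B r)"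
    by (rule sum_infsum) (use summable_on_subset_banach[OF sg] D in auto)
  moreover have "infsum g (B r) = infsum (\<lambda>k. g (7 * k + int r)) UNIV" for r
  proof -
    have "inj (\<lambda>k::int. 7 * k + int r)" by (auto simp: inj_def)
    from infsum_reindex[OF this, of g] show ?thesis by (simp add: B_def o_def)
  qed
  ultimately show ?thesis using U by simp
qed

definition xi :: complex where "xi = exp (of_real pi * \<i> / 14)"

lemma gterm_piece:
  "gterm (of_real ((2 * real j + 1) / 14)) \<tau> (7 * k + int r)
     = xi ^ ((2*j+1)*(2*r+1)) * ft (of_real (- (2 * real r + 1) / 14)) \<tau> k"
proof -
  define F where "F = of_real pi * \<i> * of_int k + 7 * of_real pi * \<i> * \<tau> * (of_int k - of_real (- (2 * real r + 1) / 14))^2"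
  define N where "N = of_nat ((2*j+1)*(2*r+1)) * (of_real pi * \<i> / 14)"
  have eq: "of_real pi * \<i> * \<tau> * (2 * of_int (7 * k + int r) + 1)^2 / 28
        + of_real pi * \<i> * of_real ((2 * real j + 1) / 14) * (2 * of_int (7 * k + int r) + 1)
      = (F + N) + 2 * of_real pi * \<i> * of_int (int j * k)"
    unfolding F_def N_def by (simp add: field_simps power2_eq_square)
  have "gterm (of_real ((2 * real j + 1) / 14)) \<tau> (7 * k + int r) = exp ((F + N) + 2 * of_real pi * \<i> * of_int (int j * k))"
    unfolding gterm_def eq ..
  also have "\<dots> = exp (F + N)" by (simp only: exp_add e2pi_int mult_1_right)
  also have "\<dots> = exp F * exp N" by (rule exp_add)
  also have "exp F = ft (of_real (- (2 * real r + 1) / 14)) \<tau> k" unfolding F_def ft_def ..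
  also have "exp N = xi ^ ((2*j+1)*(2*r+1))" unfolding N_def xi_def by (rule exp_of_nat_mult)
  finally show ?thesis by (simp only: mult.commute)
qed

lemma fS_even: "fS (- c) \<tau> = fS c \<tau>"
proof -
  have t: "ft (- c) \<tau> n = ft c \<tau> (- n)" for n
  proof -
    have "of_real pi * \<i> * of_int n + 7 * of_real pi * \<i> * \<tau> * (of_int n - - c)^2
        = (of_real pi * \<i> * of_int (- n) + 7 * of_real pi * \<i> * \<tau> * (of_int (- n) - c)^2)
          + 2 * of_real pi * \<i> * of_int n"
      by (simp add: algebra_simps power2_eq_square)
    then show ?thesis unfolding ft_def by (simp only: exp_add e2pi_int mult_1_right)
  qed
  have "ft (- c) \<tau> = (\<lambda>n. ft c \<tau> (- n))" by (rule ext) (rule t)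
  then show ?thesis unfolding fS_def
    using infsum_reindex_bij_betw[OF bij_int_uminus, of "ft c \<tau>"] by simp
qed

lemma fS_refl: "fS (1 - c) \<tau> = - fS c \<tau>"
proof -
  have t: "ft (1 - c) \<tau> (- n + 1) = - ft c \<tau> n" for n
  proof -
    have "of_real pi * \<i> * of_int (- n + 1) + 7 * of_real pi * \<i> * \<tau> * (of_int (- n + 1) - (1 - c))^2
        = of_real pi * \<i> + (of_real pi * \<i> * of_int n + 7 * of_real pi * \<i> * \<tau> * (of_int n - c)^2)
          + 2 * of_real pi * \<i> * of_int (- n)"
      by (simp add: algebra_simps power2_eq_square)
    then show ?thesis unfolding ft_def by (simp only: exp_add e2pi_int mult_1_right exp_pi_i) simp
  qed
  have b: "bij_betw (\<lambda>n::int. - n + 1) UNIV UNIV"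
    by (rule bij_betw_byWitness[where f'="\<lambda>n. 1 - n"]) auto
  have "fS (1 - c) \<tau> = infsum (\<lambda>n. ft (1 - c) \<tau> (- n + 1)) UNIV"
    unfolding fS_def by (rule infsum_reindex_bij_betw[OF b, symmetric])
  also have "\<dots> = infsum (\<lambda>n. - ft c \<tau> n) UNIV" by (simp only: t)
  also have "\<dots> = - fS c \<tau>" unfolding fS_def by (rule infsum_uminus)
  finally show ?thesis .
qed

lemma fS_inv2:
  assumes sp: "Im \<tau> > 0"
  shows "\<exists>C. \<forall>j. fS (of_real ((2 * real j + 1) / 14)) (- 1 / \<tau>)
     = C * (\<Sum>r<7. xi ^ ((2*j+1)*(2*r+1)) * fS (of_real (- (2 * real r + 1) / 14)) \<tau>)"
proof -
  obtain C where C: "\<And>c. fS c (- 1 / \<tau>) = C * infsum (gterm c \<tau>) UNIV \<and> gterm c \<tau> summable_on UNIV"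
    using fS_inv[OF sp] by blast
  have "fS (of_real ((2 * real j + 1) / 14)) (- 1 / \<tau>)
     = C * (\<Sum>r<7. xi ^ ((2*j+1)*(2*r+1)) * fS (of_real (- (2 * real r + 1) / 14)) \<tau>)" for j
  proof -
    define c where "c = (of_real ((2 * real j + 1) / 14) :: complex)"
    have "infsum (gterm c \<tau>) UNIV = (\<Sum>r<7. infsum (\<lambda>k. gterm c \<tau> (7 * k + int r)) UNIV)"
      by (rule dissect7) (use C in blast)
    also have "\<dots> = (\<Sum>r<7. xi ^ ((2*j+1)*(2*r+1)) * fS (of_real (- (2 * real r + 1) / 14)) \<tau>)"
    proof (rule sum.cong[OF refl])
      fix r
      have "(\<lambda>k. gterm c \<tau> (7 * k + int r)) = (\<lambda>k. xi ^ ((2*j+1)*(2*r+1)) * ft (of_real (- (2 * real r + 1) / 14)) \<tau> k)"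
        unfolding c_def by (rule ext) (rule gterm_piece)
      then show "infsum (\<lambda>k. gterm c \<tau> (7 * k + int r)) UNIV = xi ^ ((2*j+1)*(2*r+1)) * fS (of_real (- (2 * real r + 1) / 14)) \<tau>"
        unfolding fS_def by (simp only: infsum_cmult_right')
    qed
    finally show ?thesis using C[of c] unfolding c_def by simp
  qed
  then show ?thesis by blast
qed

lemma xi14: "xi ^ 14 = -1"
proof -
  have "xi ^ 14 = exp (of_nat 14 * (of_real pi * \<i> / 14))" unfolding xi_def by (rule exp_of_nat_mult[symmetric])
  also have "of_nat 14 * (of_real pi * \<i> / 14) = of_real pi * \<i>" by simp
  finally show ?thesis by simp
qed

lemma zeta7_xi: "zeta7 = xi ^ 4"
proof -
  have "xi ^ 4 = exp (of_nat 4 * (of_real pi * \<i> / 14))" unfolding xi_def by (rule exp_of_nat_mult[symmetric])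
  also have "of_nat 4 * (of_real pi * \<i> / 14) = 2 * of_real pi * \<i> / 7" by simp
  finally show ?thesis by (simp add: zeta7_def)
qed

lemma xi28: "xi ^ 28 = 1"
proof -
  have "xi ^ 28 = (xi ^ 14) ^ 2" by (simp add: power_mult[symmetric])
  then show ?thesis by (simp add: xi14)
qed

lemma inv_zeta7: "inverse zeta7 = xi ^ 24"
proof -
  have "xi ^ 4 * xi ^ 24 = 1" using xi28 by (simp add: power_add[symmetric])
  then show ?thesis unfolding zeta7_xi by (simp add: inverse_unique)
qed

lemma eta1_xi: "eta7 1 = xi ^ 4 + xi ^ 24"
  unfolding eta7_def power_one_right inv_zeta7 unfolding zeta7_xi ..

lemma eta3_xi: "eta7 3 = xi ^ 12 + xi ^ 16"
proof -
  have "(xi ^ 24) ^ 3 = xi ^ 16"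
  proof -
    have "(xi ^ 24) ^ 3 = xi ^ 28 * xi ^ 28 * xi ^ 16" by (simp add: power_mult[symmetric] power_add[symmetric])
    then show ?thesis by (simp add: xi28)
  qed
  moreover have "zeta7 ^ 3 = xi ^ 12" by (simp add: zeta7_xi power_mult[symmetric])
  ultimately show ?thesis by (simp add: eta7_def inv_zeta7)
qed

lemma eps1_xi: "eps1 = 1 + xi ^ 4 + xi ^ 24"
  unfolding eps1_def eta1_xi by simp

lemma c_1: "xi - xi ^ 13 = (1 + xi ^ 4 + xi ^ 24) * (xi ^ 5 - xi ^ 9)"
  using xi14 by algebra
lemma c_2: "xi ^ 3 - xi ^ 11 = - (xi ^ 12 + xi ^ 16) * (xi ^ 5 - xi ^ 9)"
  using xi14 by algebra
lemma c_3: "xi ^ 3 - xi ^ 39 = - (xi ^ 12 + xi ^ 16) * (xi ^ 5 - xi ^ 9)"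
  using xi14 by algebra
lemma c_4: "xi ^ 9 - xi ^ 33 = - (xi ^ 5 - xi ^ 9)"
  using xi14 by algebra
lemma c_5: "xi ^ 15 - xi ^ 27 = - (1 + xi ^ 4 + xi ^ 24) * (xi ^ 5 - xi ^ 9)"
  using xi14 by algebra
lemma c_6: "xi ^ 5 - xi ^ 65 = (xi ^ 5 - xi ^ 9)"
  using xi14 by algebra
lemma c_7: "xi ^ 15 - xi ^ 55 = - (1 + xi ^ 4 + xi ^ 24) * (xi ^ 5 - xi ^ 9)"
  using xi14 by algebra
lemma c_8: "xi ^ 25 - xi ^ 45 = - (xi ^ 12 + xi ^ 16) * (xi ^ 5 - xi ^ 9)"
  using xi14 by algebra

lemma zeta7_ne1: "zeta7 \<noteq> 1"
proof
  assume "zeta7 = 1"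
  then have "exp (2 * of_real pi * \<i> / 7) = 1" by (simp add: zeta7_def)
  then obtain n :: int where "Im (2 * of_real pi * \<i> / 7) = of_int (2 * n) * pi"
    unfolding exp_eq_1 by blast
  then have "2 * pi / 7 = 2 * of_int n * pi" by simp
  then have "1 = 7 * (of_int n :: real)" by (simp add: field_simps)
  then have "(1::int) = 7 * n" by linarith
  then show False by presburger
qed

lemma S7: "1 + xi ^ 4 + xi ^ 8 + xi ^ 12 + xi ^ 16 + xi ^ 20 + xi ^ 24 = 0"
proof -
  have z7: "(xi ^ 4) ^ 7 = 1" using xi28 by (simp add: power_mult[symmetric])
  have "(xi ^ 4 - 1) * (1 + xi ^ 4 + xi ^ 8 + xi ^ 12 + xi ^ 16 + xi ^ 20 + xi ^ 24) = (xi ^ 4) ^ 7 - 1"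
    by (simp add: algebra_simps power_mult[symmetric] power_add[symmetric])
  also have "\<dots> = 0" using z7 by simp
  finally show ?thesis using zeta7_ne1 unfolding zeta7_xi by simp
qed

lemma eps_eta: "eps1^2 - eps1 - 1 = - eta7 3"
  unfolding eps1_xi eta3_xi using S7 xi14 by algebra

lemma sum7: "(\<Sum>r<7. (f :: nat \<Rightarrow> complex) r) = f 0 + f 1 + f 2 + f 3 + f 4 + f 5 + f 6"
  by (simp add: eval_nat_numeral)

lemma inv_lin:
  assumes sp: "Im \<tau> > 0"
  shows "\<exists>K. fS (of_real (1/14)) (- 1 / \<tau>) = K * (eps1 * fS (of_real (1/14)) \<tau> - eta7 3 * fS (of_real (3/14)) \<tau> + fS (of_real (5/14)) \<tau>)
          \<and> fS (of_real (3/14)) (- 1 / \<tau>) = K * (- eta7 3 * fS (of_real (1/14)) \<tau> - fS (of_real (3/14)) \<tau> - eps1 * fS (of_real (5/14)) \<tau>)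
          \<and> fS (of_real (5/14)) (- 1 / \<tau>) = K * (fS (of_real (1/14)) \<tau> - eps1 * fS (of_real (3/14)) \<tau> - eta7 3 * fS (of_real (5/14)) \<tau>)"
proof -
  obtain C where C: "\<And>j. fS (of_real ((2 * real j + 1) / 14)) (- 1 / \<tau>)
     = C * (\<Sum>r<7. xi ^ ((2*j+1)*(2*r+1)) * fS (of_real (- (2 * real r + 1) / 14)) \<tau>)"
    using fS_inv2[OF sp] by blast
  define F where "F r = fS (of_real ((2 * real r + 1) / 14)) \<tau>" for r :: nat
  have Fneg: "fS (of_real (- (2 * real r + 1) / 14)) \<tau> = F r" for r
  proof -
    have "(of_real (- (2 * real r + 1) / 14) :: complex) = - of_real ((2 * real r + 1) / 14)"
      by (simp only: minus_divide_left[symmetric] of_real_minus)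
    then show ?thesis unfolding F_def by (simp only: fS_even)
  qed
  have F3: "F 3 = 0"
  proof -
    have "(of_real ((2 * real 3 + 1) / 14) :: complex) = 1 - of_real ((2 * real 3 + 1) / 14)" by simp
    then have "F 3 = - F 3" unfolding F_def by (metis fS_refl)
    then show ?thesis by simp
  qed
  have F4: "F 4 = - F 2"
  proof -
    have "(of_real ((2 * real 4 + 1) / 14) :: complex) = 1 - of_real ((2 * real 2 + 1) / 14)" by simp
    then show ?thesis unfolding F_def by (simp only: fS_refl)
  qed
  have F5: "F 5 = - F 1"
  proof -
    have "(of_real ((2 * real 5 + 1) / 14) :: complex) = 1 - of_real ((2 * real 1 + 1) / 14)" by simp
    then show ?thesis unfolding F_def by (simp only: fS_refl)
  qed
  have F6: "F 6 = - F 0"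
  proof -
    have "(of_real ((2 * real 6 + 1) / 14) :: complex) = 1 - of_real ((2 * real 0 + 1) / 14)" by simp
    then show ?thesis unfolding F_def by (simp only: fS_refl)
  qed
  have G: "fS (of_real ((2 * real j + 1) / 14)) (- 1 / \<tau>) =
     C * (xi ^ ((2*j+1)*(2*0+1)) * F 0 + xi ^ ((2*j+1)*(2*1+1)) * F 1 + xi ^ ((2*j+1)*(2*2+1)) * F 2 +
          xi ^ ((2*j+1)*(2*3+1)) * F 3 + xi ^ ((2*j+1)*(2*4+1)) * F 4 + xi ^ ((2*j+1)*(2*5+1)) * F 5 + xi ^ ((2*j+1)*(2*6+1)) * F 6)" for j
    unfolding C Fneg sum7 ..
  define K where "K = C * (xi ^ 5 - xi ^ 9)"
  have g0: "fS (of_real (1/14)) (- 1 / \<tau>) = K * (eps1 * F 0 - eta7 3 * F 1 + F 2)"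
  proof -
    have a: "(of_real ((2 * real (0::nat) + 1) / 14) :: complex) = of_real (1/14)" by simp
    have n0: "(2*0+1)*(2*0+1) = (1::nat)" by simp
    have n1: "(2*0+1)*(2*1+1) = (3::nat)" by simp
    have n2: "(2*0+1)*(2*2+1) = (5::nat)" by simp
    have n3: "(2*0+1)*(2*3+1) = (7::nat)" by simp
    have n4: "(2*0+1)*(2*4+1) = (9::nat)" by simp
    have n5: "(2*0+1)*(2*5+1) = (11::nat)" by simp
    have n6: "(2*0+1)*(2*6+1) = (13::nat)" by simp
    have "fS (of_real (1/14)) (- 1 / \<tau>) = C * (xi ^ 1 * F 0 + xi ^ 3 * F 1 + xi ^ 5 * F 2 + xi ^ 7 * F 3 + xi ^ 9 * F 4 + xi ^ 11 * F 5 + xi ^ 13 * F 6)"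
      using G[of 0] unfolding a n0 n1 n2 n3 n4 n5 n6 .
    then show ?thesis unfolding F3 F4 F5 F6 K_def eps1_xi eta3_xi using xi14 by algebra
  qed
  have g1: "fS (of_real (3/14)) (- 1 / \<tau>) = K * (- eta7 3 * F 0 - F 1 - eps1 * F 2)"
  proof -
    have a: "(of_real ((2 * real (1::nat) + 1) / 14) :: complex) = of_real (3/14)" by simp
    have n0: "(2*1+1)*(2*0+1) = (3::nat)" by simp
    have n1: "(2*1+1)*(2*1+1) = (9::nat)" by simp
    have n2: "(2*1+1)*(2*2+1) = (15::nat)" by simp
    have n3: "(2*1+1)*(2*3+1) = (21::nat)" by simp
    have n4: "(2*1+1)*(2*4+1) = (27::nat)" by simp
    have n5: "(2*1+1)*(2*5+1) = (33::nat)" by simp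
    have n6: "(2*1+1)*(2*6+1) = (39::nat)" by simp
    have "fS (of_real (3/14)) (- 1 / \<tau>) = C * (xi ^ 3 * F 0 + xi ^ 9 * F 1 + xi ^ 15 * F 2 + xi ^ 21 * F 3 + xi ^ 27 * F 4 + xi ^ 33 * F 5 + xi ^ 39 * F 6)"
      using G[of 1] unfolding a n0 n1 n2 n3 n4 n5 n6 .
    then show ?thesis unfolding F3 F4 F5 F6 K_def eps1_xi eta3_xi using xi14 by algebra
  qed
  have g2: "fS (of_real (5/14)) (- 1 / \<tau>) = K * (F 0 - eps1 * F 1 - eta7 3 * F 2)"
  proof -
    have a: "(of_real ((2 * real (2::nat) + 1) / 14) :: complex) = of_real (5/14)" by simp
    have n0: "(2*2+1)*(2*0+1) = (5::nat)" by simp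
    have n1: "(2*2+1)*(2*1+1) = (15::nat)" by simp
    have n2: "(2*2+1)*(2*2+1) = (25::nat)" by simp
    have n3: "(2*2+1)*(2*3+1) = (35::nat)" by simp
    have n4: "(2*2+1)*(2*4+1) = (45::nat)" by simp
    have n5: "(2*2+1)*(2*5+1) = (55::nat)" by simp
    have n6: "(2*2+1)*(2*6+1) = (65::nat)" by simp
    have "fS (of_real (5/14)) (- 1 / \<tau>) = C * (xi ^ 5 * F 0 + xi ^ 15 * F 1 + xi ^ 25 * F 2 + xi ^ 35 * F 3 + xi ^ 45 * F 4 + xi ^ 55 * F 5 + xi ^ 65 * F 6)"
      using G[of 2] unfolding a n0 n1 n2 n3 n4 n5 n6 .
    then show ?thesis unfolding F3 F4 F5 F6 K_def eps1_xi eta3_xi using xi14 by algebra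
  qed
  have FF: "F 0 = fS (of_real (1/14)) \<tau>" "F 1 = fS (of_real (3/14)) \<tau>" "F 2 = fS (of_real (5/14)) \<tau>"
    unfolding F_def by simp_all
  show ?thesis using g0 g1 g2 unfolding FF by blast
qed

theorem theorem2:
  fixes \<tau> :: complex
  assumes "Im \<tau> > 0"
  shows "s_fun (-1 / \<tau>) =
           (eps1 * s_fun \<tau> - eta7 3 * t_fun \<tau> + 1) / (s_fun \<tau> - eps1 * t_fun \<tau> - eta7 3)
       \<and> (eps1 * s_fun \<tau> - eta7 3 * t_fun \<tau> + 1) / (s_fun \<tau> - eps1 * t_fun \<tau> - eta7 3) =
           (eps1 * s_fun \<tau> + (eps1^2 - eps1 - 1) * t_fun \<tau> + 1) /
           (s_fun \<tau> - eps1 * t_fun \<tau> + eps1^2 - eps1 - 1)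
       \<and> t_fun (-1 / \<tau>) =
           (- eta7 3 * s_fun \<tau> - t_fun \<tau> - eps1) / (s_fun \<tau> - eps1 * t_fun \<tau> - eta7 3)
       \<and> (- eta7 3 * s_fun \<tau> - t_fun \<tau> - eps1) / (s_fun \<tau> - eps1 * t_fun \<tau> - eta7 3) =
           ((eps1^2 - eps1 - 1) * s_fun \<tau> - t_fun \<tau> - eps1) /
           (s_fun \<tau> - eps1 * t_fun \<tau> + eps1^2 - eps1 - 1)"
proof -
  have sp: "Im \<tau> > 0" by fact
  have sp': "Im (- 1 / \<tau>) > 0" by (rule Im_inv[OF sp])
  define A where "A = fS (of_real (1/14)) \<tau>"
  define B where "B = fS (of_real (3/14)) \<tau>"
  define D where "D = fS (of_real (5/14)) \<tau>"
  obtain K where K: "fS (of_real (1/14)) (- 1 / \<tau>) = K * (eps1 * A - eta7 3 * B + D)"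
        "fS (of_real (3/14)) (- 1 / \<tau>) = K * (- eta7 3 * A - B - eps1 * D)"
        "fS (of_real (5/14)) (- 1 / \<tau>) = K * (A - eps1 * B - eta7 3 * D)"
    using inv_lin[OF sp] unfolding A_def B_def D_def by blast
  have D0: "D \<noteq> 0" unfolding D_def by (rule fS5_nz[OF sp])
  have D'0: "K * (A - eps1 * B - eta7 3 * D) \<noteq> 0" using fS5_nz[OF sp'] K(3) by simp
  then have K0: "K \<noteq> 0" and Y0: "A - eps1 * B - eta7 3 * D \<noteq> 0" by auto
  have s: "s_fun \<tau> = A / D" unfolding s_eq[OF sp] A_def D_def ..
  have t: "t_fun \<tau> = B / D" unfolding t_eq[OF sp] B_def D_def ..
  have s': "s_fun (-1 / \<tau>) = K * (eps1 * A - eta7 3 * B + D) / (K * (A - eps1 * B - eta7 3 * D))"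
    unfolding s_eq[OF sp'] K(1) K(3) ..
  have t': "t_fun (-1 / \<tau>) = K * (- eta7 3 * A - B - eps1 * D) / (K * (A - eps1 * B - eta7 3 * D))"
    unfolding t_eq[OF sp'] K(2) K(3) ..
  have den: "s_fun \<tau> - eps1 * t_fun \<tau> - eta7 3 = (A - eps1 * B - eta7 3 * D) / D"
    unfolding s t using D0 by (simp add: field_simps)
  have num1: "eps1 * s_fun \<tau> - eta7 3 * t_fun \<tau> + 1 = (eps1 * A - eta7 3 * B + D) / D"
    unfolding s t using D0 by (simp add: field_simps)
  have num2: "- eta7 3 * s_fun \<tau> - t_fun \<tau> - eps1 = (- eta7 3 * A - B - eps1 * D) / D"
    unfolding s t using D0 by (simp add: field_simps)
  have e2: "eps1^2 - eps1 - 1 = - eta7 3" by (rule eps_eta)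
  have den2: "s_fun \<tau> - eps1 * t_fun \<tau> + eps1^2 - eps1 - 1 = s_fun \<tau> - eps1 * t_fun \<tau> - eta7 3"
    using e2 by (simp add: algebra_simps)
  have gen: "K * X / (K * Y) = (X / D) / (Y / D)" for X Y
  proof -
    have "K * X / (K * Y) = X / Y" using K0 by (rule mult_divide_mult_cancel_left)
    also have "\<dots> = (X / D) / (Y / D)" using D0 by (simp add: divide_divide_eq_left divide_divide_eq_right)
    finally show ?thesis .
  qed
  have c1: "s_fun (-1 / \<tau>) = (eps1 * s_fun \<tau> - eta7 3 * t_fun \<tau> + 1) / (s_fun \<tau> - eps1 * t_fun \<tau> - eta7 3)"
    unfolding s' den num1 by (rule gen)
  have c3: "t_fun (-1 / \<tau>) = (- eta7 3 * s_fun \<tau> - t_fun \<tau> - eps1) / (s_fun \<tau> - eps1 * t_fun \<tau> - eta7 3)"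
    unfolding t' den num2 by (rule gen)
  have c2: "(eps1 * s_fun \<tau> - eta7 3 * t_fun \<tau> + 1) / (s_fun \<tau> - eps1 * t_fun \<tau> - eta7 3) =
           (eps1 * s_fun \<tau> + (eps1^2 - eps1 - 1) * t_fun \<tau> + 1) /
           (s_fun \<tau> - eps1 * t_fun \<tau> + eps1^2 - eps1 - 1)"
    unfolding den2 e2 by (simp add: algebra_simps)
  have c4: "(- eta7 3 * s_fun \<tau> - t_fun \<tau> - eps1) / (s_fun \<tau> - eps1 * t_fun \<tau> - eta7 3) =
           ((eps1^2 - eps1 - 1) * s_fun \<tau> - t_fun \<tau> - eps1) /
           (s_fun \<tau> - eps1 * t_fun \<tau> + eps1^2 - eps1 - 1)"
    unfolding den2 e2 by (simp add: algebra_simps)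
  show ?thesis using c1 c2 c3 c4 by blast
qed


end
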